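(* Let $z:[0,\infty)\to X_{0+}$ be a solution of the modified Becker–Döring equations obtained by the truncation construction described in the context. Then $J_l(z(t))\to0$ as $t\to\infty$ for every $l\ge0$.
   Context: Let $(q_l)_{l\ge1}$ be positive with $q_1=1$, $0<R:=\lim_l q_l/q_{l+1}<\infty$, and $\gamma_l>0$ with $\gamma_l/l\to0$. $X=\{z:\sum_l l|z_l|<\infty\}$, $X_{0+}$ its nonnegative elements, $\rho(z)=\sum_l lz_l$, $N(z)=\sum_lz_l$, $J_l(z)=\gamma_l\big(z_1z_l-N(z)\frac{q_l}{q_{l+1}}z_{l+1}\big)$ ($l\ge1$), $J_0(z)=-\sum_{l\ge1}J_l(z)$, $A(z)=\sum_lz_l\ln(z_l/(q_lN(z)))$ ($0\ln0=0$). Fix initial data $y\in X_{0+}$ with $y_1>0$ and $\rho_0:=\rho(y)>0$. For $m\ge2$ let $z^{(m)}$ be the solution of the truncated system $\dot z_l=J_{l-1}(z)-J_l(z)$ ($2\le l\le m-1$), $\dot z_m=J_{m-1}(z)$, $\dot z_1=-J_1(z)-\sum_{l=1}^{m-1}J_l(z)$, $z_l(0)=y_l$ ($l\le m$), with $z_l\equiv0$ for $l>m$. The solution $z$ is a continuous map $[0,\infty)\to X$ such that, for some subsequence $m_j\to\infty$, $z^{(m_j)}_l\to z_l$ uniformly on compact subsets of $[0,\infty)$ for every $l$. Such $z$ exists; it satisfies $z_l(t)\ge0$, $\rho(z(t))=\rho_0$ for all $t$, $\frac{d}{dt}z_l=J_{l-1}(z)-J_l(z)$ for $l\ge2$, $z_1(t_2)-z_1(t_1)=\int_{t_1}^{t_2}J_0(z(t))dt$,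 and $A(z(t_1))-A(z(t_2))\ge \frac{c}{\rho_0^2}\int_{t_1}^{t_2}\sum_{l\ge1}|J_l(z(t))|^2dt$ for $t_1\le t_2$, with $c>0$. *)

theory Defs
  imports "HOL-Analysis.Analysis"
begin

text \<open>Sequences z = (z_l)_{l>=1} are represented as functions nat => real;
  the entry at index 0 is ignored by every definition below.\<close>

definition inX :: "(nat \<Rightarrow> real) \<Rightarrow> bool" where
  "inX z \<longleftrightarrow> summable (\<lambda>l. real (Suc l) * \<bar>z (Suc l)\<bar>)"

definition Xnorm :: "(nat \<Rightarrow> real) \<Rightarrow> real" where
  "Xnorm z = (\<Sum>l. real (Suc l) * \<bar>z (Suc l)\<bar>)"

definition rho :: "(nat \<Rightarrow> real) \<Rightarrow> real" where
  "rho z = (\<Sum>l. real (Suc l) * z (Suc l))"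

definition Ntot :: "(nat \<Rightarrow> real) \<Rightarrow> real" where
  "Ntot z = (\<Sum>l. z (Suc l))"

definition Jflux :: "(nat \<Rightarrow> real) \<Rightarrow> (nat \<Rightarrow> real) \<Rightarrow> (nat \<Rightarrow> real) \<Rightarrow> nat \<Rightarrow> real" where
  "Jflux q \<gamma> z l =
     (if l = 0 then - (\<Sum>k. \<gamma> (Suc k) * (z 1 * z (Suc k) - Ntot z * (q (Suc k) / q (Suc (Suc k))) * z (Suc (Suc k))))
      else \<gamma> l * (z 1 * z l - Ntot z * (q l / q (Suc l)) * z (Suc l)))"

definition trunc_solution ::
  "(nat \<Rightarrow> real) \<Rightarrow> (nat \<Rightarrow> real) \<Rightarrow> (nat \<Rightarrow> real) \<Rightarrow> nat \<Rightarrow> (real \<Rightarrow> nat \<Rightarrow> real) \<Rightarrow> bool" where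
  "trunc_solution q \<gamma> y m zm \<longleftrightarrow>
     (\<forall>l. 1 \<le> l \<and> l \<le> m \<longrightarrow> zm 0 l = y l) \<and>
     (\<forall>t\<ge>0. \<forall>l>m. zm t l = 0) \<and>
     (\<forall>t\<ge>0. \<forall>l. 2 \<le> l \<and> l \<le> m - 1 \<longrightarrow>
        ((\<lambda>s. zm s l) has_real_derivative
           (Jflux q \<gamma> (zm t) (l - 1) - Jflux q \<gamma> (zm t) l)) (at t within {0..})) \<and>
     (\<forall>t\<ge>0. ((\<lambda>s. zm s m) has_real_derivative Jflux q \<gamma> (zm t) (m - 1)) (at t within {0..})) \<and>
     (\<forall>t\<ge>0. ((\<lambda>s. zm s 1) has_real_derivative
           (- Jflux q \<gamma> (zm t) 1 - (\<Sum>l=1..m-1. Jflux q \<gamma> (zm t) l))) (at t within {0..}))"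

definition trunc_limit_solution ::
  "(nat \<Rightarrow> real) \<Rightarrow> (nat \<Rightarrow> real) \<Rightarrow> (nat \<Rightarrow> real) \<Rightarrow> (real \<Rightarrow> nat \<Rightarrow> real) \<Rightarrow> bool" where
  "trunc_limit_solution q \<gamma> y z \<longleftrightarrow>
     (\<forall>t\<ge>0. inX (z t)) \<and>
     (\<forall>t0\<ge>0. ((\<lambda>t. Xnorm (\<lambda>l. z t l - z t0 l)) \<longlongrightarrow> 0) (at t0 within {0..})) \<and>
     (\<exists>zs :: nat \<Rightarrow> real \<Rightarrow> nat \<Rightarrow> real. \<exists>r :: nat \<Rightarrow> nat.
        (\<forall>m\<ge>2. trunc_solution q \<gamma> y m (zs m)) \<and>
        strict_mono r \<and> (\<forall>j. 2 \<le> r j) \<and>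
        (\<forall>l\<ge>1. \<forall>T\<ge>0. uniform_limit {0..T} (\<lambda>j t. zs (r j) t l) (\<lambda>t. z t l) sequentially))"

end

theory Submission
  imports Defs
begin


lemma log_diss:
  fixes a b :: real
  assumes "a > 0" "b > 0"
  shows "(a - b)^2 / (a + b) \<le> (a - b) * (ln a - ln b)"
proof (cases "a \<ge> b")
  case True
  have "ln (b/a) \<le> b/a - 1" using ln_le_minus_one assms by simp
  hence "ln a - ln b \<ge> 1 - b/a" using assms by (simp add: ln_div)
  hence "ln a - ln b \<ge> (a - b)/a" using assms by (simp add: field_simps)
  moreover have "(a-b)/(a+b) \<le> (a-b)/a" using assms True by (simp add: frac_le)
  ultimately have "(a-b)/(a+b) \<le> ln a - ln b" by linarith
  from mult_left_mono[OF this, of "a-b"] True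
  show ?thesis by (simp add: power2_eq_square)
next
  case False
  have "ln (a/b) \<le> a/b - 1" using ln_le_minus_one assms by simp
  hence "ln b - ln a \<ge> 1 - a/b" using assms by (simp add: ln_div)
  hence "ln b - ln a \<ge> (b - a)/b" using assms by (simp add: field_simps)
  moreover have "(b-a)/(a+b) \<le> (b-a)/b" using assms False by (simp add: frac_le)
  ultimately have "(b-a)/(a+b) \<le> ln b - ln a" by linarith
  from mult_left_mono[OF this, of "b-a"] False
  have "(b - a) * ((b - a) / (a + b)) \<le> (b - a) * (ln b - ln a)" by simp
  thus ?thesis by (simp add: power2_eq_square algebra_simps)
qed

lemma xlnx_ge_minus_one:
  fixes x :: real assumes "x \<ge> 0" shows "x * ln x \<ge> -1"
proof (cases "x = 0")
  case False
  hence "x > 0" using assms by simp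
  have "ln (1/x) \<le> 1/x - 1" using ln_le_minus_one \<open>x>0\<close> by simp
  hence "- ln x \<le> 1/x - 1" using \<open>x>0\<close> by (simp add: ln_div)
  hence "x * (- ln x) \<le> x * (1/x - 1)" using \<open>x>0\<close> by (intro mult_left_mono) auto
  moreover have "x*(1/x-1) = 1 - x" using \<open>x>0\<close> by (simp add: field_simps)
  ultimately show ?thesis using \<open>x>0\<close> by simp
qed simp

lemma xlnx_lower:
  fixes x l :: real assumes "x \<ge> 0" shows "x * ln x \<ge> - (l * x) - exp (- l)"
proof (cases "x = 0")
  case False
  hence xp: "x > 0" using assms by simp
  define u where "u = x * exp l"
  have up: "u > 0" using xp by (simp add: u_def)
  have "u * ln u \<ge> -1" using xlnx_ge_minus_one up by simp
  have "ln u = ln x + l" using xp by (simp add: u_def ln_mult)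
  have "x = u * exp (-l)" by (simp add: u_def exp_minus field_simps)
  have "x * ln x + l * x = x * ln u" using \<open>ln u = ln x + l\<close> by (simp add: algebra_simps)
  also have "\<dots> = exp (-l) * (u * ln u)" using \<open>x = u * exp (-l)\<close> by simp
  also have "\<dots> \<ge> exp (-l) * (-1)" using \<open>u * ln u \<ge> -1\<close> by (intro mult_left_mono) auto
  finally show ?thesis by simp
qed simp

lemma xlnx_upper:
  fixes x r :: real assumes "x \<ge> 0" "x \<le> r" shows "x * ln x \<le> x * r"
proof (cases "x = 0")
  case False
  hence xp: "x > 0" using assms by simp
  have "ln x < x" using xp by simp
  hence "ln x \<le> r" using assms by simp
  thus ?thesis using xp by (simp add: mult_left_mono)
qed simp

lemma sum_exp_neg_le: "(\<Sum>l=1..m. exp (- real l)) \<le> (1::real)"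
proof -
  have e: "exp (-1::real) \<le> 1/2"
  proof -
    have "2 \<le> exp (1::real)" using exp_ge_add_one_self[of 1] by simp
    thus ?thesis by (simp add: exp_minus field_simps)
  qed
  have "\<And>l. exp (- real l) \<le> (1/2::real)^l"
  proof -
    fix l
    have "exp (- real l) = exp (-1::real) ^ l" by (metis exp_of_nat_mult mult.right_neutral mult_minus_right)
    also have "\<dots> \<le> (1/2)^l" by (rule power_mono[OF e]) simp
    finally show "exp (- real l) \<le> (1/2::real)^l" .
  qed
  hence "(\<Sum>l=1..m. exp (- real l)) \<le> (\<Sum>l=1..m. (1/2::real)^l)" by (intro sum_mono) auto
  also have "(\<Sum>l=1..m. (1/2::real)^l) = 1 - (1/2)^m"
    by (induction m) (auto simp: sum.atLeast1_atMost_eq)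
  finally show ?thesis by (smt (verit) zero_le_power zero_le_divide_1_iff)
qed

lemma sum_by_parts:
  fixes u j :: "nat \<Rightarrow> real"
  assumes "m \<ge> 1"
  shows "(\<Sum>l=2..m. u l * (j (l-1) - j l)) = (\<Sum>k=1..m-1. j k * (u (Suc k) - u k)) + u 1 * j 1 - u m * j m"
  using assms
proof (induction m rule: dec_induct)
  case base
  then show ?case by simp
next
  case (step n)
  have "(\<Sum>l=2..Suc n. u l * (j (l-1) - j l)) = (\<Sum>l=2..n. u l * (j (l-1) - j l)) + u (Suc n) * (j n - j (Suc n))"
    using step by (simp add: sum.atLeast_Suc_atMost_Suc_shift)
  moreover have "(\<Sum>k=1..Suc n-1. j k * (u (Suc k) - u k)) = (\<Sum>k=1..n-1. j k * (u (Suc k) - u k)) + j n * (u (Suc n) - u n)"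
    using step by (cases n) (auto)
  ultimately show ?case using step by (simp add: algebra_simps)
qed

lemma Ntot_finite:
  assumes "\<forall>l>m. x l = 0"
  shows "Ntot x = (\<Sum>l=1..m. x l)"
proof -
  have "(\<lambda>l. x (Suc l)) sums (\<Sum>l<m. x (Suc l))"
    by (rule sums_finite) (use assms in auto)
  hence "Ntot x = (\<Sum>l<m. x (Suc l))" unfolding Ntot_def by (simp add: sums_iff)
  also have "\<dots> = (\<Sum>l=1..m. x l)" by (simp add: sum_bounds_lt_plus1)
  finally show ?thesis .
qed



lemma DERIV_minsq: "((\<lambda>x::real. (min x 0)^2) has_real_derivative 2 * min x 0) (at x)"
proof -
  consider "x < 0" | "x > 0" | "x = 0" by linarith
  then show ?thesis
  proof cases
    case 1
    have "((\<lambda>x::real. x^2) has_real_derivative 2 * x) (at x)"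
      by (auto intro!: derivative_eq_intros)
    from has_field_derivative_transform_within_open[OF this, of "{..<0}"] 1
    show ?thesis by auto
  next
    case 2
    have "((\<lambda>x::real. 0) has_real_derivative 0) (at x)" by simp
    from has_field_derivative_transform_within_open[OF this, of "{0<..}"] 2
    show ?thesis by auto
  next
    case 3
    have "((\<lambda>h. ((min (0 + h) 0)^2 - (min 0 0)^2) / h) \<longlongrightarrow> 0) (at (0::real))"
    proof (rule Lim_null_comparison)
      show "\<forall>\<^sub>F h in at 0. norm (((min (0 + h) 0)^2 - (min 0 0)^2) / h) \<le> norm (h::real)"
      proof (rule always_eventually, intro allI)
        fix h :: real
        show "norm (((min (0 + h) 0)^2 - (min 0 0)^2) / h) \<le> norm h"
          by (cases "h < 0") (auto simp: power2_eq_square abs_mult)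
      qed
      show "((\<lambda>h. norm h) \<longlongrightarrow> 0) (at (0::real))"
        using tendsto_norm_zero[OF tendsto_ident_at[of "0::real" UNIV]] by simp
    qed
    then show ?thesis using 3 by (simp add: DERIV_def)
  qed
qed

lemma min0_sq: "min (x::real) 0 * x = (min x 0)^2"
  by (auto simp: power2_eq_square min_def)

lemma nonneg_gronwall:
  fixes v :: "real \<Rightarrow> nat \<Rightarrow> real" and g :: "nat \<Rightarrow> real \<Rightarrow> real"
  assumes fin: "finite I" and C: "C \<ge> 0"
    and der: "\<And>l t. l \<in> I \<Longrightarrow> t \<in> {0..T} \<Longrightarrow> ((\<lambda>s. v s l) has_real_derivative g l t) (at t within {0..T})"
    and init: "\<And>l. l \<in> I \<Longrightarrow> v 0 l \<ge> 0"
    and bnd: "\<And>l t. l \<in> I \<Longrightarrow> t \<in> {0..T} \<Longrightarrow> min (v t l) 0 * g l t \<le> C * (\<Sum>k\<in>I. (min (v t k) 0)^2)"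
    and l: "l \<in> I" and t: "t \<in> {0..T}"
  shows "v t l \<ge> 0"
proof -
  define V where "V s = (\<Sum>k\<in>I. (min (v s k) 0)^2)" for s
  define V' where "V' s = (\<Sum>k\<in>I. 2 * min (v s k) 0 * g k s)" for s
  define K where "K = 2 * real (card I) * C"
  define G where "G s = V s * exp (- (K * s))" for s
  define G' where "G' s = V' s * exp (- (K * s)) + V s * (exp (- (K * s)) * (- K))" for s
  have dV: "(V has_real_derivative V' s) (at s within {0..T})" if "s \<in> {0..T}" for s
    unfolding V_def V'_def
    by (rule DERIV_sum, rule DERIV_chain2[OF DERIV_minsq der]) (use that in auto)
  have dG: "(G has_real_derivative G' s) (at s within {0..T})" if "s \<in> {0..T}" for s
    unfolding G_def G'_def
    by (rule derivative_eq_intros dV[OF that] | simp)+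
  have V'le: "V' s \<le> K * V s" if "s \<in> {0..T}" for s
  proof -
    have "V' s \<le> (\<Sum>k\<in>I. 2 * (C * V s))"
      unfolding V'_def V_def
      by (intro sum_mono) (use bnd that in \<open>auto simp: mult.assoc\<close>)
    also have "\<dots> = K * V s" by (simp add: K_def)
    finally show ?thesis .
  qed
  have G'le: "G' s \<le> 0" if "s \<in> {0..T}" for s
  proof -
    have "G' s = exp (- (K * s)) * (V' s - K * V s)" by (simp add: G'_def algebra_simps)
    also have "\<dots> \<le> 0" using V'le[OF that] by (intro mult_nonneg_nonpos) auto
    finally show ?thesis .
  qed
  have "V 0 = 0" unfolding V_def using init by (auto intro!: sum.neutral simp: min_absorb2)
  hence G0: "G 0 = 0" by (simp add: G_def)
  have "\<exists>x\<in>{0..t}. G t - G 0 = (*) (G' x) (t - 0)"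
  proof (rule mvt_very_simple)
    show "0 \<le> t" using t by simp
    fix x assume "0 \<le> x" "x \<le> t"
    hence "x \<in> {0..T}" using t by auto
    from DERIV_subset[OF dG[OF this], of "{0..t}"] t
    show "(G has_derivative (*) (G' x)) (at x within {0..t})"
      by (auto simp: has_field_derivative_def)
  qed
  then obtain x where x: "x \<in> {0..t}" "G t = t * G' x" using G0 by (auto simp: mult.commute)
  hence "G t \<le> 0" using G'le[of x] t by (auto intro: mult_nonneg_nonpos)
  hence "V t \<le> 0" unfolding G_def by (simp add: mult_le_0_iff)
  moreover have "V t \<ge> 0" unfolding V_def by (auto intro: sum_nonneg)
  ultimately have "V t = 0" by simp
  hence "(min (v t l) 0)^2 = 0" unfolding V_def using fin l
    by (subst (asm) sum_nonneg_eq_0_iff) auto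
  thus ?thesis by (simp add: min_def split: if_splits)
qed

lemma bnd_from_decomp:
  fixes v :: "nat \<Rightarrow> real"
  assumes fin: "finite I" and l: "l \<in> I" and C1: "C1 \<ge> 0" and C2: "C2 \<ge> 0"
    and Q: "\<bar>Q\<bar> \<le> C1" and P: "P \<ge> - C2 * (\<Sum>k\<in>I. \<bar>min (v k) 0\<bar>)"
  shows "min (v l) 0 * (v l * Q + P) \<le> (C1 + C2 * real (card I)) * (\<Sum>k\<in>I. (min (v k) 0)^2)"
proof -
  define V where "V = (\<Sum>k\<in>I. (min (v k) 0)^2)"
  have Vge: "(min (v k) 0)^2 \<le> V" if "k \<in> I" for k
    unfolding V_def using fin that by (intro member_le_sum) auto
  have V0: "V \<ge> 0" unfolding V_def by (auto intro: sum_nonneg)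
  have a: "min (v l) 0 * v l * Q \<le> C1 * V"
  proof -
    have "min (v l) 0 * v l * Q = (min (v l) 0)^2 * Q" by (simp add: min0_sq)
    also have "\<dots> \<le> (min (v l) 0)^2 * C1" using Q by (intro mult_left_mono) auto
    also have "\<dots> \<le> V * C1" using Vge[OF l] C1 by (intro mult_right_mono) auto
    finally show ?thesis by (simp add: mult.commute)
  qed
  have b: "min (v l) 0 * P \<le> \<bar>min (v l) 0\<bar> * (C2 * (\<Sum>k\<in>I. \<bar>min (v k) 0\<bar>))"
  proof -
    have "min (v l) 0 * P = - (\<bar>min (v l) 0\<bar> * P)" by (simp add: min_def)
    also have "\<dots> \<le> - (\<bar>min (v l) 0\<bar> * (- C2 * (\<Sum>k\<in>I. \<bar>min (v k) 0\<bar>)))"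
      using P by (intro le_imp_neg_le mult_left_mono) auto
    finally show ?thesis by simp
  qed
  have c: "\<bar>min (v l) 0\<bar> * (\<Sum>k\<in>I. \<bar>min (v k) 0\<bar>) \<le> real (card I) * V"
  proof -
    have "\<bar>min (v l) 0\<bar> * (\<Sum>k\<in>I. \<bar>min (v k) 0\<bar>) = (\<Sum>k\<in>I. \<bar>min (v l) 0\<bar> * \<bar>min (v k) 0\<bar>)"
      by (simp add: sum_distrib_left)
    also have "\<dots> \<le> (\<Sum>k\<in>I. V)"
    proof (intro sum_mono)
      fix k assume k: "k \<in> I"
      have "\<bar>min (v l) 0\<bar> * \<bar>min (v k) 0\<bar> \<le> ((min (v l) 0)^2 + (min (v k) 0)^2) / 2"
        using sum_squares_bound[of "\<bar>min (v l) 0\<bar>" "\<bar>min (v k) 0\<bar>"] by (simp add: power2_eq_square abs_mult_self_eq field_simps)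
      also have "\<dots> \<le> V" using Vge[OF l] Vge[OF k] by simp
      finally show "\<bar>min (v l) 0\<bar> * \<bar>min (v k) 0\<bar> \<le> V" .
    qed
    also have "\<dots> = real (card I) * V" by simp
    finally show ?thesis .
  qed
  have "min (v l) 0 * (v l * Q + P) = min (v l) 0 * v l * Q + min (v l) 0 * P" by (simp add: algebra_simps)
  also have "\<dots> \<le> C1 * V + C2 * (real (card I) * V)"
    using a b mult_left_mono[OF c C2] by (simp add: algebra_simps) 
  finally show ?thesis by (simp add: V_def algebra_simps)
qed

lemma prod_lower:
  fixes x y B :: real
  assumes "\<bar>x\<bar> \<le> B" "\<bar>y\<bar> \<le> B"
  shows "x * y \<ge> - B * (\<bar>min x 0\<bar> + \<bar>min y 0\<bar>)"
proof -
  have B: "B \<ge> 0" using assms by linarith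
  consider "x \<ge> 0" "y \<ge> 0" | "x < 0" "y \<ge> 0" | "x \<ge> 0" "y < 0" | "x < 0" "y < 0" by linarith
  then show ?thesis
  proof cases
    case 1 thus ?thesis using B by (simp add: min_def)
  next
    case 2
    have "- (x * y) = \<bar>x\<bar> * y" using 2 by simp
    also have "\<dots> \<le> \<bar>x\<bar> * B" using assms 2 by (intro mult_left_mono) auto
    finally have "x * y \<ge> - B * \<bar>x\<bar>" by (simp add: algebra_simps)
    moreover have "\<bar>min x 0\<bar> = \<bar>x\<bar>" "\<bar>min y 0\<bar> = 0" using 2 by auto
    ultimately show ?thesis by simp
  next
    case 3
    have "- (x * y) = x * \<bar>y\<bar>" using 3 by simp
    also have "\<dots> \<le> B * \<bar>y\<bar>" using assms 3 by (intro mult_right_mono) auto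
    finally have "x * y \<ge> - B * \<bar>y\<bar>" by (simp add: algebra_simps)
    moreover have "\<bar>min y 0\<bar> = \<bar>y\<bar>" "\<bar>min x 0\<bar> = 0" using 3 by auto
    ultimately show ?thesis by simp
  next
    case 4
    have "x * y > 0" using 4 by (simp add: mult_neg_neg)
    moreover have "B * (\<bar>min x 0\<bar> + \<bar>min y 0\<bar>) \<ge> 0" using B by simp
    ultimately show ?thesis by linarith
  qed
qed

lemma bounded_components:
  fixes v :: "real \<Rightarrow> nat \<Rightarrow> real"
  assumes "finite I" "compact S" "\<And>k. k \<in> I \<Longrightarrow> continuous_on S (\<lambda>t. v t k)"
  shows "\<exists>B\<ge>0. \<forall>k\<in>I. \<forall>t\<in>S. \<bar>v t k\<bar> \<le> B"
  using assms
proof (induction I rule: finite_induct)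
  case empty thus ?case by auto
next
  case (insert a I)
  then obtain B where B: "B \<ge> 0" "\<forall>k\<in>I. \<forall>t\<in>S. \<bar>v t k\<bar> \<le> B" by auto
  have "compact ((\<lambda>t. v t a) ` S)" using insert by (intro compact_continuous_image) auto
  then obtain B' where B': "\<forall>x\<in>(\<lambda>t. v t a) ` S. norm x \<le> B'"
    using compact_imp_bounded bounded_iff by metis
  show ?case
    by (rule exI[of _ "max B B'"]) (use B B' in \<open>fastforce simp: le_max_iff_disj\<close>)
qed

lemma pos_grow:
  fixes g f :: "real \<Rightarrow> real"
  assumes T: "T > 0"
    and der: "\<And>t. t \<in> {0..T} \<Longrightarrow> (g has_real_derivative f t) (at t within {0..T})"
    and f: "\<And>t. t \<in> {0..T} \<Longrightarrow> f t \<ge> - C * g t"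
    and g0: "g 0 \<ge> 0"
    and strict: "g 0 > 0 \<or> (\<forall>t\<in>{0<..<T}. f t > - C * g t)"
  shows "g T > 0"
proof -
  define h where "h t = g t * exp (C * t)" for t
  define h' where "h' t = f t * exp (C * t) + g t * (exp (C * t) * C)" for t
  have dh: "(h has_real_derivative h' t) (at t within {0..T})" if "t \<in> {0..T}" for t
    unfolding h_def h'_def
    by (rule derivative_eq_intros der[OF that] | simp)+
  have h'eq: "h' t = exp (C * t) * (f t + C * g t)" for t by (simp add: h'_def algebra_simps)
  have "\<exists>x\<in>{0<..<T}. h T - h 0 = (*) (h' x) (T - 0)"
  proof (rule mvt_simple)
    show "0 < T" by fact
    fix x assume "0 \<le> x" "x \<le> T"
    from dh[of x] this show "(h has_derivative (*) (h' x)) (at x within {0..T})"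
      by (auto simp: has_field_derivative_def)
  qed
  then obtain x where x: "x \<in> {0<..<T}" "h T - h 0 = T * h' x" by (auto simp: mult.commute)
  have "h' x \<ge> 0" unfolding h'eq using f[of x] x by (intro mult_nonneg_nonneg) auto
  have "h T > 0"
    using strict
  proof
    assume "g 0 > 0"
    hence "h 0 > 0" by (simp add: h_def)
    moreover have "T * h' x \<ge> 0" using T \<open>h' x \<ge> 0\<close> by simp
    ultimately show ?thesis using x by linarith
  next
    assume "\<forall>t\<in>{0<..<T}. f t > - C * g t"
    hence "f x + C * g x > 0" using x by force
    hence "h' x > 0" unfolding h'eq by simp
    hence "T * h' x > 0" using T by simp
    moreover have "h 0 \<ge> 0" using g0 by (simp add: h_def)
    ultimately show ?thesis using x by linarith
  qed
  thus ?thesis by (simp add: h_def zero_less_mult_iff)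
qed



locale trunc =
  fixes q \<gamma> y :: "nat \<Rightarrow> real" and m :: nat and w :: "real \<Rightarrow> nat \<Rightarrow> real" and Cg Cc Lq :: real
  assumes m2: "m \<ge> 2" and sol: "trunc_solution q \<gamma> y m w"
    and q_pos: "\<forall>l\<ge>1. q l > 0" and q1: "q 1 = 1" and gamma_pos: "\<forall>l\<ge>1. \<gamma> l > 0"
    and y_nonneg: "\<forall>l\<ge>1. y l \<ge> 0" and y1: "y 1 > 0" and y_X: "inX y"
    and Cg: "Cg > 0" "\<forall>l\<ge>1. \<gamma> l \<le> Cg * real l"
    and Cc: "Cc \<ge> 0" "\<forall>l\<ge>1. q l / q (Suc l) \<le> Cc"
    and Lq: "Lq \<ge> 0" "\<forall>l\<ge>1. \<bar>ln (q l)\<bar> \<le> Lq * real l"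
begin

definition "c k = q k / q (Suc k)"
definition "Nw t = (\<Sum>k=1..m. w t k)"
definition "J k t = \<gamma> k * (w t 1 * w t k - Nw t * c k * w t (Suc k))"
definition "jj k t = (if 1 \<le> k \<and> k < m then J k t else 0)"
definition "f l t = (if l = 1 then - jj 1 t - (\<Sum>k=1..m-1. jj k t) else jj (l-1) t - jj l t)"
definition "Q l t = (if l = 1 then - \<gamma> 1 * w t 1 - (\<Sum>k=1..m-1. \<gamma> k * w t k)
   else - \<gamma> (l-1) * Nw t * c (l-1) - (if l < m then \<gamma> l * w t 1 else 0))"
definition "P l t = (if l = 1 then \<gamma> 1 * c 1 * Nw t * w t 2 + (\<Sum>k=1..m-1. \<gamma> k * c k * Nw t * w t (Suc k))
   else \<gamma> (l-1) * w t 1 * w t (l-1) + (if l < m then \<gamma> l * c l * Nw t * w t (Suc l) else 0))"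

lemma c_pos: "k \<ge> 1 \<Longrightarrow> c k > 0"
  using q_pos by (simp add: c_def)
lemma c_le: "k \<ge> 1 \<Longrightarrow> c k \<le> Cc"
  using Cc by (simp add: c_def)
lemma g_pos: "k \<ge> 1 \<Longrightarrow> \<gamma> k > 0" using gamma_pos by simp
lemma g_le: "k \<ge> 1 \<Longrightarrow> \<gamma> k \<le> Cg * real k" using Cg by simp

lemma w_zero: "t \<ge> 0 \<Longrightarrow> l > m \<Longrightarrow> w t l = 0"
  using sol by (simp add: trunc_solution_def)

lemma w_init: "1 \<le> l \<Longrightarrow> l \<le> m \<Longrightarrow> w 0 l = y l"
  using sol by (simp add: trunc_solution_def)

lemma sol_mid: "t \<ge> 0 \<Longrightarrow> 2 \<le> l \<Longrightarrow> l \<le> m - 1 \<Longrightarrow>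
  ((\<lambda>s. w s l) has_real_derivative (Jflux q \<gamma> (w t) (l - 1) - Jflux q \<gamma> (w t) l)) (at t within {0..})"
  using sol unfolding trunc_solution_def by blast
lemma sol_last: "t \<ge> 0 \<Longrightarrow>
  ((\<lambda>s. w s m) has_real_derivative Jflux q \<gamma> (w t) (m - 1)) (at t within {0..})"
  using sol unfolding trunc_solution_def by blast
lemma sol_first: "t \<ge> 0 \<Longrightarrow>
  ((\<lambda>s. w s 1) has_real_derivative (- Jflux q \<gamma> (w t) 1 - (\<Sum>l=1..m-1. Jflux q \<gamma> (w t) l))) (at t within {0..})"
  using sol unfolding trunc_solution_def by blast

lemma Ntot_w: "t \<ge> 0 \<Longrightarrow> Ntot (w t) = Nw t"
  unfolding Nw_def by (rule Ntot_finite) (use w_zero in auto)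

lemma Jflux_w: "t \<ge> 0 \<Longrightarrow> k \<ge> 1 \<Longrightarrow> Jflux q \<gamma> (w t) k = J k t"
  using Ntot_w by (simp add: Jflux_def J_def c_def)

lemma deriv_w:
  assumes t: "t \<ge> 0" and l: "l \<in> {1..m}"
  shows "((\<lambda>s. w s l) has_real_derivative f l t) (at t within {0..})"
proof -
  consider "l = 1" | "2 \<le> l \<and> l \<le> m - 1" | "l = m" using l m2 by force
  then show ?thesis
  proof cases
    case 1
    have "(\<Sum>k=1..m-1. Jflux q \<gamma> (w t) k) = (\<Sum>k=1..m-1. jj k t)"
      by (rule sum.cong) (use t m2 in \<open>auto simp: jj_def Jflux_w\<close>)
    moreover have "Jflux q \<gamma> (w t) 1 = jj 1 t" using t m2 by (simp add: jj_def Jflux_w)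
    moreover note sol_first[OF t]
    ultimately show ?thesis using 1 by (simp add: f_def)
  next
    case 2
    have "Jflux q \<gamma> (w t) (l - 1) - Jflux q \<gamma> (w t) l = f l t"
      using 2 t m2 by (auto simp: jj_def Jflux_w f_def)
    thus ?thesis using sol_mid[OF t, of l] 2 by auto
  next
    case 3
    have "Jflux q \<gamma> (w t) (m - 1) = f l t"
      using 3 t m2 by (simp add: jj_def Jflux_w f_def)
    thus ?thesis using sol_last[OF t] 3 by simp
  qed
qed

lemma cont_w: assumes "k \<in> {1..m}" shows "continuous_on {0..} (\<lambda>s. w s k)"
proof -
  have "continuous (at s within {0..}) (\<lambda>s. w s k)" if "s \<in> {0..}" for s
    using DERIV_continuous[OF deriv_w[of s k]] that assms by auto
  thus ?thesis by (simp add: continuous_on_eq_continuous_within)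
qed

lemma decomp:
  assumes l: "l \<in> {1..m}"
  shows "f l t = w t l * Q l t + P l t"
proof (cases "l = 1")
  case True
  have "(\<Sum>k=1..m-1. jj k t) = (\<Sum>k=1..m-1. J k t)"
    by (rule sum.cong) (auto simp: jj_def)
  moreover have "jj 1 t = J 1 t" using m2 by (simp add: jj_def)
  ultimately have "f l t = - J 1 t - (\<Sum>k=1..m-1. J k t)" using True by (simp add: f_def)
  also have "\<dots> = w t l * Q l t + P l t"
  proof -
    have e: "J k t = w t 1 * (\<gamma> k * w t k) - \<gamma> k * c k * Nw t * w t (Suc k)" for k
      by (simp add: J_def algebra_simps)
    have s1: "(\<Sum>k=1..m-1. J k t) = w t 1 * (\<Sum>k=1..m-1. \<gamma> k * w t k) - (\<Sum>k=1..m-1. \<gamma> k * c k * Nw t * w t (Suc k))"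
      unfolding e by (simp add: sum_subtractf sum_distrib_left)
    have s2: "J 1 t = w t 1 * (\<gamma> 1 * w t 1) - \<gamma> 1 * c 1 * Nw t * w t 2"
      using e[of 1] by (simp add: numeral_2_eq_2)
    have s3: "Q 1 t = - \<gamma> 1 * w t 1 - (\<Sum>k=1..m-1. \<gamma> k * w t k)" using True by (simp add: Q_def)
    have s4: "P 1 t = \<gamma> 1 * c 1 * Nw t * w t 2 + (\<Sum>k=1..m-1. \<gamma> k * c k * Nw t * w t (Suc k))" using True by (simp add: P_def)
    show ?thesis unfolding True s1 s2 s3 s4 by (simp add: algebra_simps)
  qed
  finally show ?thesis .
next
  case False
  hence l2: "l \<ge> 2" "l \<le> m" using l by auto
  have "jj (l-1) t = J (l-1) t" using l2 by (auto simp: jj_def)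
  moreover have "jj l t = (if l < m then J l t else 0)" using l2 by (simp add: jj_def)
  ultimately have "f l t = J (l-1) t - (if l < m then J l t else 0)" using False by (simp add: f_def)
  also have "\<dots> = w t l * Q l t + P l t"
    using False l2 by (simp add: J_def Q_def P_def algebra_simps)
  finally show ?thesis .
qed

end


lemma kappa_lower:
  fixes \<kappa> K X D :: real
  assumes "0 \<le> \<kappa>" "\<kappa> \<le> K" "X \<ge> - D" "D \<ge> 0"
  shows "\<kappa> * X \<ge> - (K * D)"
proof -
  have "\<kappa> * X \<ge> \<kappa> * (- D)" using assms by (intro mult_left_mono) auto
  moreover have "\<kappa> * D \<le> K * D" using assms by (intro mult_right_mono) auto
  ultimately show ?thesis by simp
qed

context trunc begin

definition "kmax = Cg * real m * (1 + Cc)"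

lemma kmax_ge: "k \<in> {1..m} \<Longrightarrow> \<gamma> k \<le> kmax \<and> \<gamma> k * c k \<le> kmax \<and> 0 \<le> \<gamma> k * c k \<and> 0 \<le> \<gamma> k"
proof -
  assume k: "k \<in> {1..m}"
  have g: "0 < \<gamma> k" "\<gamma> k \<le> Cg * real m"
    using g_pos[of k] g_le[of k] k Cg by (auto intro: order.trans[OF _ mult_left_mono])
  have cc: "0 < c k" "c k \<le> Cc" using c_pos c_le k by auto
  have "Cg * real m * 1 \<le> Cg * real m * (1 + Cc)" using Cg Cc by (intro mult_left_mono) auto
  hence "Cg * real m \<le> kmax" unfolding kmax_def by simp
  moreover have "\<gamma> k * c k \<le> Cg * real m * Cc" using g cc by (intro mult_mono) auto
  moreover have "Cg * real m * Cc \<le> kmax" unfolding kmax_def using Cg Cc by (simp add: mult_left_mono)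
  ultimately show ?thesis using g cc by auto
qed

lemma kmax_nonneg: "kmax \<ge> 0" unfolding kmax_def using Cg Cc by simp

lemma nonneg_w:
  assumes t: "t \<ge> 0" and l: "l \<in> {1..m}"
  shows "w t l \<ge> 0"
proof -
  define I where "I = {1..m}"
  have finI: "finite I" by (simp add: I_def)
  have cardI: "card I = m" by (simp add: I_def)
  have "continuous_on {0..t} (\<lambda>s. w s k)" if "k \<in> I" for k
    by (rule continuous_on_subset[OF cont_w]) (use that in \<open>auto simp: I_def\<close>)
  then obtain B where B: "B \<ge> 0" "\<forall>k\<in>I. \<forall>s\<in>{0..t}. \<bar>w s k\<bar> \<le> B"
    using bounded_components[of I "{0..t}" w] finI by auto
  define S where "S s = (\<Sum>k\<in>I. \<bar>min (w s k) 0\<bar>)" for s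
  define D where "D s = 2 * real m * B * S s" for s
  define C1 where "C1 = (2 * real m + 1) * kmax * B"
  define C2 where "C2 = (real m + 2) * kmax * real m * (2 * real m * B)"
  have S0: "S s \<ge> 0" for s unfolding S_def by (auto intro: sum_nonneg)
  have D0: "D s \<ge> 0" for s unfolding D_def using B S0 by simp
  have nS: "\<bar>min (w s k) 0\<bar> \<le> S s" if "k \<in> I" for s k
    unfolding S_def using finI that by (intro member_le_sum) auto
  have m1: "real m \<ge> 1" using m2 by simp
  have prodD: "w s i * w s i' \<ge> - D s" if "i \<in> I" "i' \<in> I" "s \<in> {0..t}" for s i i'
  proof -
    have "w s i * w s i' \<ge> - B * (\<bar>min (w s i) 0\<bar> + \<bar>min (w s i') 0\<bar>)"
      using B that by (intro prod_lower) auto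
    moreover have "B * (\<bar>min (w s i) 0\<bar> + \<bar>min (w s i') 0\<bar>) \<le> B * (2 * S s)"
      using nS[OF that(1), of s] nS[OF that(2), of s] B by (intro mult_left_mono) auto
    moreover have "B * (2 * S s) \<le> D s"
    proof -
      have "B * (1 * S s) \<le> B * (real m * S s)"
        by (rule mult_left_mono[OF mult_right_mono[OF m1 S0[of s]] B(1)])
      thus ?thesis unfolding D_def by (simp add: algebra_simps)
    qed
    ultimately show ?thesis by linarith
  qed
  have NabsB: "\<bar>Nw s\<bar> \<le> real m * B" if "s \<in> {0..t}" for s
  proof -
    have "\<bar>Nw s\<bar> \<le> (\<Sum>k\<in>I. \<bar>w s k\<bar>)" unfolding Nw_def I_def by (rule sum_abs)
    also have "\<dots> \<le> (\<Sum>k\<in>I. B)" using B that by (intro sum_mono) auto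
    finally show ?thesis using cardI by simp
  qed
  have NprodD: "Nw s * w s i \<ge> - (real m * D s)" if "i \<in> I" "s \<in> {0..t}" for s i
  proof -
    have "Nw s * w s i = (\<Sum>k\<in>I. w s k * w s i)" unfolding Nw_def I_def by (simp add: sum_distrib_right)
    also have "\<dots> \<ge> (\<Sum>k\<in>I. - D s)" using prodD that by (intro sum_mono) auto
    finally show ?thesis using cardI by simp
  qed
  have mD: "D s \<le> real m * D s" for s using m1 D0[of s] by (simp add: mult_le_cancel_right1)
  have Qb: "\<bar>Q k s\<bar> \<le> C1" if "k \<in> I" "s \<in> {0..t}" for k s
  proof (cases "k = 1")
    case True
    have "\<bar>Q k s\<bar> \<le> \<bar>\<gamma> 1 * w s 1\<bar> + \<bar>\<Sum>j=1..m-1. \<gamma> j * w s j\<bar>"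
      using True by (simp add: Q_def)
    also have "\<bar>\<Sum>j=1..m-1. \<gamma> j * w s j\<bar> \<le> (\<Sum>j=1..m-1. kmax * B)"
    proof -
      have "\<bar>\<Sum>j=1..m-1. \<gamma> j * w s j\<bar> \<le> (\<Sum>j=1..m-1. \<bar>\<gamma> j * w s j\<bar>)" by (rule sum_abs)
      also have "\<dots> \<le> (\<Sum>j=1..m-1. kmax * B)"
      proof (intro sum_mono)
        fix j assume j: "j \<in> {1..m-1}"
        hence jI: "j \<in> I" unfolding I_def by auto
        have "\<bar>\<gamma> j * w s j\<bar> = \<gamma> j * \<bar>w s j\<bar>" using kmax_ge[of j] jI by (simp add: abs_mult I_def)
        also have "\<dots> \<le> kmax * B" using kmax_ge[of j] jI B that by (intro mult_mono) (auto simp: I_def)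
        finally show "\<bar>\<gamma> j * w s j\<bar> \<le> kmax * B" .
      qed
      finally show ?thesis .
    qed
    also have "\<bar>\<gamma> 1 * w s 1\<bar> \<le> kmax * B"
    proof -
      have "1 \<in> I" using m2 by (simp add: I_def)
      hence "\<bar>\<gamma> 1 * w s 1\<bar> = \<gamma> 1 * \<bar>w s 1\<bar>" using kmax_ge[of 1] by (simp add: abs_mult I_def)
      also have "\<dots> \<le> kmax * B" using kmax_ge[of 1] \<open>1 \<in> I\<close> B that by (intro mult_mono) (auto simp: I_def)
      finally show ?thesis .
    qed
    finally have "\<bar>Q k s\<bar> \<le> kmax * B + real (m - 1) * (kmax * B)" by simp
    also have "\<dots> \<le> C1" unfolding C1_def using kmax_nonneg B m2
      by (simp add: algebra_simps of_nat_diff mult_right_mono)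
    finally show ?thesis .
  next
    case False
    hence k2: "k \<ge> 2" "k \<le> m" using that by (auto simp: I_def)
    have k1I: "k - 1 \<in> I" using k2 by (auto simp: I_def)
    have "\<bar>Q k s\<bar> \<le> \<bar>\<gamma> (k-1) * c (k-1) * Nw s\<bar> + \<bar>\<gamma> k * w s 1\<bar>"
      using False by (auto simp: Q_def algebra_simps)
    also have "\<bar>\<gamma> (k-1) * c (k-1) * Nw s\<bar> \<le> kmax * (real m * B)"
    proof -
      have "\<bar>\<gamma> (k-1) * c (k-1) * Nw s\<bar> = (\<gamma> (k-1) * c (k-1)) * \<bar>Nw s\<bar>"
        using kmax_ge[of "k-1"] k1I c_pos[of "k-1"] k2 by (simp add: abs_mult I_def)
      also have "\<dots> \<le> kmax * (real m * B)"
        using kmax_ge[of "k-1"] k1I NabsB[OF that(2)] by (intro mult_mono) (auto simp: I_def)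
      finally show ?thesis .
    qed
    also have "\<bar>\<gamma> k * w s 1\<bar> \<le> kmax * B"
    proof -
      have "1 \<in> I" using m2 by (simp add: I_def)
      have "\<bar>\<gamma> k * w s 1\<bar> = \<gamma> k * \<bar>w s 1\<bar>" using kmax_ge[of k] that by (simp add: abs_mult I_def)
      also have "\<dots> \<le> kmax * B" using kmax_ge[of k] that B \<open>1 \<in> I\<close> by (intro mult_mono) (auto simp: I_def)
      finally show ?thesis .
    qed
    finally have "\<bar>Q k s\<bar> \<le> kmax * (real m * B) + kmax * B" by simp
    moreover have "0 \<le> kmax * (real m * B)" using kmax_nonneg B by simp
    moreover have "C1 = kmax * B + 2 * (kmax * (real m * B))" unfolding C1_def by (simp add: algebra_simps)
    ultimately show ?thesis by linarith
  qed
  have Pb: "P k s \<ge> - C2 * S s" if "k \<in> I" "s \<in> {0..t}" for k s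
  proof -
    have KD: "kmax * (real m * D s) = (2 * real m * B) * kmax * real m * S s" unfolding D_def by simp
    have "P k s \<ge> - ((real m + 2) * (kmax * (real m * D s)))"
    proof (cases "k = 1")
      case True
      have "2 \<in> I" "1 \<in> I" using m2 by (auto simp: I_def)
      have a: "\<gamma> 1 * c 1 * Nw s * w s 2 \<ge> - (kmax * (real m * D s))"
        using kappa_lower[OF _ _ NprodD[OF \<open>2 \<in> I\<close> that(2)], of "\<gamma> 1 * c 1" kmax] kmax_ge[of 1] \<open>1 \<in> I\<close> D0 m1
        by (simp add: I_def mult.assoc)
      have b: "(\<Sum>j=1..m-1. \<gamma> j * c j * Nw s * w s (Suc j)) \<ge> (\<Sum>j=1..m-1. - (kmax * (real m * D s)))"
      proof (intro sum_mono)
        fix j assume j: "j \<in> {1..m-1}"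
        hence "Suc j \<in> I" "j \<in> I" unfolding I_def by auto
        thus "\<gamma> j * c j * Nw s * w s (Suc j) \<ge> - (kmax * (real m * D s))"
          using kappa_lower[OF _ _ NprodD[OF \<open>Suc j \<in> I\<close> that(2)], of "\<gamma> j * c j" kmax] kmax_ge[of j] D0 m1
          by (simp add: I_def mult.assoc)
      qed
      have "(\<Sum>j=1..m-1. - (kmax * (real m * D s))) = - (real (m-1) * (kmax * (real m * D s)))" by simp
      moreover have "real (m-1) * (kmax * (real m * D s)) \<le> (real m + 1) * (kmax * (real m * D s))"
        using kmax_nonneg D0[of s] m2 by (intro mult_right_mono) (auto simp: of_nat_diff)
      ultimately have "P k s \<ge> - (kmax * (real m * D s)) - (real m + 1) * (kmax * (real m * D s))"
        using a b True by (simp add: P_def)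
      thus ?thesis by (simp add: algebra_simps)
    next
      case False
      hence k2: "k \<ge> 2" "k \<le> m" using that by (auto simp: I_def)
      have k1I: "k - 1 \<in> I" "1 \<in> I" using k2 by (auto simp: I_def)
      have a: "\<gamma> (k-1) * w s 1 * w s (k-1) \<ge> - (kmax * (real m * D s))"
      proof -
        have X: "w s 1 * w s (k-1) \<ge> - (real m * D s)"
          using prodD[OF k1I(2) k1I(1) that(2)] mD[of s] by linarith
        have g: "0 \<le> \<gamma> (k-1)" "\<gamma> (k-1) \<le> kmax" using kmax_ge[of "k-1"] k1I by (auto simp: I_def)
        have "0 \<le> real m * D s" using D0[of s] by simp
        from kappa_lower[OF g X this]
        have "\<gamma> (k-1) * (w s 1 * w s (k-1)) \<ge> - (kmax * (real m * D s))" .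
        thus ?thesis by (simp add: mult.assoc)
      qed
      have b: "(if k < m then \<gamma> k * c k * Nw s * w s (Suc k) else 0) \<ge> - (kmax * (real m * D s))"
      proof (cases "k < m")
        case True
        hence "Suc k \<in> I" using k2 by (auto simp: I_def)
        thus ?thesis using True kappa_lower[OF _ _ NprodD[OF \<open>Suc k \<in> I\<close> that(2)], of "\<gamma> k * c k" kmax] kmax_ge[of k] that D0 m1
          by (simp add: I_def mult.assoc)
      next
        case False thus ?thesis using kmax_nonneg D0[of s] m1 by simp
      qed
      have "P k s \<ge> - (2 * (kmax * (real m * D s)))" using a b False by (simp add: P_def)
      moreover have "2 * (kmax * (real m * D s)) \<le> (real m + 2) * (kmax * (real m * D s))"
        using kmax_nonneg D0[of s] m1 by (intro mult_right_mono) auto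
      ultimately show ?thesis by linarith
    qed
    also have "(real m + 2) * (kmax * (real m * D s)) = C2 * S s" unfolding C2_def D_def by (simp add: algebra_simps)
    finally show ?thesis by simp
  qed
  have C1: "C1 \<ge> 0" unfolding C1_def using kmax_nonneg B by simp
  have C2: "C2 \<ge> 0" unfolding C2_def using kmax_nonneg B by simp
  show ?thesis
  proof (rule nonneg_gronwall[where I=I and C="C1 + C2 * real (card I)" and T=t and v=w and g=f])
    show "finite I" by fact
    show "C1 + C2 * real (card I) \<ge> 0" using C1 C2 by simp
    show "((\<lambda>s. w s k) has_real_derivative f k s) (at s within {0..t})" if "k \<in> I" "s \<in> {0..t}" for k s
      using DERIV_subset[OF deriv_w[of s k]] that by (auto simp: I_def)
    show "0 \<le> w 0 k" if "k \<in> I" for k using w_init y_nonneg that by (auto simp: I_def)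
    show "min (w s k) 0 * f k s \<le> (C1 + C2 * real (card I)) * (\<Sum>j\<in>I. (min (w s j) 0)\<^sup>2)"
      if "k \<in> I" "s \<in> {0..t}" for k s
      unfolding decomp[of k s, OF that(1)[unfolded I_def]]
      by (rule bnd_from_decomp[OF finI that(1) C1 C2 Qb[OF that] Pb[OF that, unfolded S_def]])
    show "l \<in> I" using l by (simp add: I_def)
    show "t \<in> {0..t}" using t by simp
  qed
qed

end


context trunc begin

definition "rh = rho y"
definition "Lam = Cg * rh * rh * (1 + Cc)"
definition "Gk k t = \<gamma> k * (w t 1 * w t k + Nw t * c k * w t (Suc k))"

lemma nonneg_all: "t \<ge> 0 \<Longrightarrow> k \<ge> 1 \<Longrightarrow> w t k \<ge> 0"
  using nonneg_w w_zero by (cases "k \<le> m") auto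

lemma sum_f:
  "(\<Sum>l=1..m. u l * f l t) = (\<Sum>k=1..m-1. jj k t * (u (Suc k) - u k - u 1))"
proof -
  have split: "{1..m} = insert 1 {2..m}" using m2 by auto
  have "(\<Sum>l=1..m. u l * f l t) = u 1 * f 1 t + (\<Sum>l=2..m. u l * f l t)"
    unfolding split by simp
  also have "(\<Sum>l=2..m. u l * f l t) = (\<Sum>l=2..m. u l * (jj (l-1) t - jj l t))"
    by (rule sum.cong) (auto simp: f_def)
  also have "\<dots> = (\<Sum>k=1..m-1. jj k t * (u (Suc k) - u k)) + u 1 * jj 1 t - u m * jj m t"
    by (rule sum_by_parts[where j="\<lambda>k. jj k t"]) (use m2 in simp)
  also have "jj m t = 0" by (simp add: jj_def)
  finally have "(\<Sum>l=1..m. u l * f l t) = u 1 * f 1 t + (\<Sum>k=1..m-1. jj k t * (u (Suc k) - u k)) + u 1 * jj 1 t"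
    by simp
  also have "u 1 * f 1 t = - u 1 * jj 1 t - (\<Sum>k=1..m-1. jj k t * u 1)"
    by (simp add: f_def algebra_simps sum_distrib_left)
  finally show ?thesis by (simp add: algebra_simps sum_subtractf sum.distrib)
qed

lemma mass_deriv: "t \<ge> 0 \<Longrightarrow> ((\<lambda>s. \<Sum>l=1..m. real l * w s l) has_real_derivative 0) (at t within {0..})"
proof -
  assume t: "t \<ge> 0"
  have "((\<lambda>s. \<Sum>l=1..m. real l * w s l) has_real_derivative (\<Sum>l=1..m. real l * f l t)) (at t within {0..})"
    by (rule DERIV_sum, rule DERIV_cmult, rule deriv_w) (use t in auto)
  moreover have "(\<Sum>l=1..m. real l * f l t) = 0"
    using sum_f[of real t] by simp
  ultimately show ?thesis by simp
qed

lemma N_deriv: "t \<ge> 0 \<Longrightarrow> (Nw has_real_derivative (- (\<Sum>k=1..m-1. jj k t))) (at t within {0..})"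
proof -
  assume t: "t \<ge> 0"
  have "((\<lambda>s. \<Sum>l=1..m. w s l) has_real_derivative (\<Sum>l=1..m. f l t)) (at t within {0..})"
    by (rule DERIV_sum, rule deriv_w) (use t in auto)
  moreover have "(\<Sum>l=1..m. f l t) = - (\<Sum>k=1..m-1. jj k t)"
    using sum_f[of "\<lambda>_. 1" t] by (simp add: sum_negf)
  ultimately show ?thesis unfolding Nw_def[abs_def] by simp
qed

lemma mass_eq: "t \<ge> 0 \<Longrightarrow> (\<Sum>l=1..m. real l * w t l) = (\<Sum>l=1..m. real l * y l)"
proof -
  assume t: "t \<ge> 0"
  obtain C where C: "\<forall>x\<in>{0..}. (\<Sum>l=1..m. real l * w x l) = C"
    using has_field_derivative_zero_constant[of "{0::real..}" "\<lambda>s. \<Sum>l=1..m. real l * w s l"] mass_deriv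
    by auto
  have "(\<Sum>l=1..m. real l * w 0 l) = (\<Sum>l=1..m. real l * y l)"
    by (rule sum.cong) (auto simp: w_init)
  thus ?thesis using C t by force
qed

lemma ymass_le: "(\<Sum>l=1..m. real l * y l) \<le> rh"
proof -
  have summ: "summable (\<lambda>l. real (Suc l) * y (Suc l))"
  proof -
    have "summable (\<lambda>l. real (Suc l) * \<bar>y (Suc l)\<bar>)" using y_X by (simp add: inX_def)
    moreover have "real (Suc l) * \<bar>y (Suc l)\<bar> = real (Suc l) * y (Suc l)" for l using y_nonneg by simp
    ultimately show ?thesis by simp
  qed
  have "(\<Sum>l=1..m. real l * y l) = (\<Sum>l<m. real (Suc l) * y (Suc l))"
    by (simp only: sum_bounds_lt_plus1[where f="\<lambda>l. real l * y l", symmetric])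
  also have "\<dots> \<le> (\<Sum>l. real (Suc l) * y (Suc l))"
    by (rule sum_le_suminf[OF summ]) (use y_nonneg in auto)
  finally show ?thesis by (simp add: rh_def rho_def)
qed

lemma rh_pos: "rh > 0"
proof -
  have "real 1 * y 1 \<le> (\<Sum>l=1..m. real l * y l)"
    by (rule member_le_sum) (use m2 y_nonneg in auto)
  thus ?thesis using ymass_le y1 by simp
qed

lemma mass_le: "t \<ge> 0 \<Longrightarrow> (\<Sum>l=1..m. real l * w t l) \<le> rh"
  using mass_eq ymass_le by simp

lemma kw_le: assumes "t \<ge> 0" "k \<ge> 1" shows "real k * w t k \<le> rh"
proof (cases "k \<le> m")
  case True
  have "real k * w t k \<le> (\<Sum>l=1..m. real l * w t l)"
    by (rule member_le_sum) (use True assms nonneg_all in auto)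
  thus ?thesis using mass_le[OF assms(1)] by linarith
next
  case False thus ?thesis using w_zero assms rh_pos by simp
qed

lemma w_le: assumes "t \<ge> 0" "k \<ge> 1" shows "w t k \<le> rh"
proof -
  have "w t k \<le> real k * w t k" using nonneg_all[OF assms] assms(2)
    by (simp add: mult_le_cancel_right1)
  thus ?thesis using kw_le[OF assms] by simp
qed

lemma N_nonneg: "t \<ge> 0 \<Longrightarrow> Nw t \<ge> 0"
  unfolding Nw_def using nonneg_all by (auto intro: sum_nonneg)

lemma N_le: assumes "t \<ge> 0" shows "Nw t \<le> rh"
proof -
  have "Nw t \<le> (\<Sum>l=1..m. real l * w t l)" unfolding Nw_def
  proof (rule sum_mono)
    fix l assume l: "l \<in> {1..m}"
    hence "w t l \<ge> 0" using nonneg_all assms by auto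
    thus "w t l \<le> real l * w t l" using l by (simp add: mult_le_cancel_right1)
  qed
  thus ?thesis using mass_le[OF assms] by linarith
qed

lemma sum_kw_shift: assumes "t \<ge> 0" shows "(\<Sum>k=1..m-1. real (Suc k) * w t (Suc k)) \<le> rh"
proof -
  have "(\<Sum>k=1..m-1. real (Suc k) * w t (Suc k)) = (\<Sum>l=Suc 1..Suc (m-1). real l * w t l)"
    by (simp only: sum.shift_bounds_cl_Suc_ivl)
  also have "\<dots> \<le> (\<Sum>l=1..m. real l * w t l)"
    by (rule sum_mono2) (use m2 nonneg_all assms in auto)
  finally show ?thesis using mass_le[OF assms] by linarith
qed

lemma Gk_bound:
  assumes t: "t \<ge> 0" and k: "k \<ge> 1"
  shows "Gk k t \<le> Cg * rh * (real k * w t k) + Cg * rh * Cc * (real (Suc k) * w t (Suc k))"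
proof -
  have g: "0 \<le> \<gamma> k" "\<gamma> k \<le> Cg * real k" using g_pos[OF k] g_le[OF k] by auto
  have cc: "0 \<le> c k" "c k \<le> Cc" using c_pos[OF k] c_le[OF k] by auto
  have w1: "0 \<le> w t 1" "w t 1 \<le> rh" using nonneg_all w_le t by auto
  have wk: "0 \<le> w t k" using nonneg_all t k by auto
  have wk1: "0 \<le> w t (Suc k)" using nonneg_all t by auto
  have N: "0 \<le> Nw t" "Nw t \<le> rh" using N_nonneg N_le t by auto
  have a: "\<gamma> k * (w t 1 * w t k) \<le> Cg * rh * (real k * w t k)"
  proof -
    have "\<gamma> k * (w t 1 * w t k) \<le> (Cg * real k) * (rh * w t k)"
      using g w1 wk by (intro mult_mono mult_right_mono) auto
    thus ?thesis by (simp add: algebra_simps)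
  qed
  have b: "\<gamma> k * (Nw t * c k * w t (Suc k)) \<le> Cg * rh * Cc * (real (Suc k) * w t (Suc k))"
  proof -
    have "\<gamma> k * (Nw t * c k * w t (Suc k)) \<le> (Cg * real k) * (rh * Cc * w t (Suc k))"
      using g N cc wk1 Cc by (intro mult_mono mult_right_mono) auto
    also have "\<dots> \<le> (Cg * real (Suc k)) * (rh * Cc * w t (Suc k))"
      using Cg rh_pos Cc wk1 by (intro mult_right_mono mult_left_mono) auto
    finally show ?thesis by (simp add: algebra_simps)
  qed
  show ?thesis using a b unfolding Gk_def by (simp add: algebra_simps)
qed

lemma Gk_le_Lam: assumes t: "t \<ge> 0" and k: "k \<ge> 1" shows "Gk k t \<le> Lam"
proof -
  have "Cg * rh * (real k * w t k) \<le> Cg * rh * rh"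
    using kw_le[OF t k] Cg rh_pos by (intro mult_left_mono) auto
  moreover have "Cg * rh * Cc * (real (Suc k) * w t (Suc k)) \<le> Cg * rh * Cc * rh"
    using kw_le[OF t, of "Suc k"] Cg rh_pos Cc by (intro mult_left_mono) auto
  ultimately show ?thesis using Gk_bound[OF t k] unfolding Lam_def by (simp add: algebra_simps)
qed

lemma absJ_le_Gk: assumes t: "t \<ge> 0" and k: "k \<ge> 1" shows "\<bar>J k t\<bar> \<le> Gk k t"
proof -
  have g: "0 \<le> \<gamma> k" using g_pos[OF k] by auto
  have "0 \<le> w t 1 * w t k" using nonneg_all t k by auto
  moreover have "0 \<le> Nw t * c k * w t (Suc k)" using N_nonneg[OF t] c_pos[OF k] nonneg_all[OF t, of "Suc k"] by auto
  ultimately have "\<bar>w t 1 * w t k - Nw t * c k * w t (Suc k)\<bar> \<le> w t 1 * w t k + Nw t * c k * w t (Suc k)" by linarith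
  hence "\<gamma> k * \<bar>w t 1 * w t k - Nw t * c k * w t (Suc k)\<bar> \<le> Gk k t"
    unfolding Gk_def using g by (intro mult_left_mono) auto
  thus ?thesis unfolding J_def using g by (simp add: abs_mult)
qed

lemma Lam_nonneg: "Lam \<ge> 0" unfolding Lam_def using Cg Cc rh_pos by simp
lemma Lam_pos: "Lam > 0" unfolding Lam_def using Cg Cc rh_pos by simp

lemma jj_le: "t \<ge> 0 \<Longrightarrow> \<bar>jj k t\<bar> \<le> Lam"
  using absJ_le_Gk Gk_le_Lam Lam_nonneg by (force simp: jj_def)

lemma sum_jj_le: assumes t: "t \<ge> 0" shows "(\<Sum>k=1..m-1. \<bar>jj k t\<bar>) \<le> Lam"
proof -
  have "(\<Sum>k=1..m-1. \<bar>jj k t\<bar>) \<le> (\<Sum>k=1..m-1. Cg * rh * (real k * w t k) + Cg * rh * Cc * (real (Suc k) * w t (Suc k)))"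
  proof (rule sum_mono)
    fix k assume "k \<in> {1..m-1}"
    hence "jj k t = J k t" "k \<ge> 1" using m2 by (auto simp: jj_def)
    thus "\<bar>jj k t\<bar> \<le> Cg * rh * (real k * w t k) + Cg * rh * Cc * (real (Suc k) * w t (Suc k))"
      using absJ_le_Gk[OF t] Gk_bound[OF t] by force
  qed
  also have "\<dots> = Cg * rh * (\<Sum>k=1..m-1. real k * w t k) + Cg * rh * Cc * (\<Sum>k=1..m-1. real (Suc k) * w t (Suc k))"
    by (simp add: sum.distrib sum_distrib_left)
  also have "\<dots> \<le> Cg * rh * rh + Cg * rh * Cc * rh"
  proof (intro add_mono mult_left_mono)
    have "(\<Sum>k=1..m-1. real k * w t k) \<le> (\<Sum>k=1..m. real k * w t k)"
      by (rule sum_mono2) (use nonneg_all t in auto)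
    thus "(\<Sum>k=1..m-1. real k * w t k) \<le> rh" using mass_le[OF t] by simp
    show "(\<Sum>k=1..m-1. real (Suc k) * w t (Suc k)) \<le> rh" using sum_kw_shift[OF t] .
  qed (use Cg Cc rh_pos in auto)
  finally show ?thesis unfolding Lam_def by (simp add: algebra_simps)
qed

lemma f_le: assumes t: "t \<ge> 0" and l: "l \<in> {1..m}" shows "\<bar>f l t\<bar> \<le> 2 * Lam"
proof (cases "l = 1")
  case True
  have "\<bar>f l t\<bar> \<le> \<bar>jj 1 t\<bar> + \<bar>\<Sum>k=1..m-1. jj k t\<bar>" using True by (simp add: f_def)
  also have "\<bar>\<Sum>k=1..m-1. jj k t\<bar> \<le> (\<Sum>k=1..m-1. \<bar>jj k t\<bar>)" by (rule sum_abs)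
  finally show ?thesis using jj_le[OF t, of 1] sum_jj_le[OF t] by simp
next
  case False
  hence "\<bar>f l t\<bar> \<le> \<bar>jj (l-1) t\<bar> + \<bar>jj l t\<bar>" by (simp add: f_def)
  thus ?thesis using jj_le[OF t, of "l-1"] jj_le[OF t, of l] by simp
qed

lemma w_lip: assumes s: "s \<ge> 0" and t: "t \<ge> 0" and k: "k \<ge> 1"
  shows "\<bar>w s k - w t k\<bar> \<le> 2 * Lam * \<bar>s - t\<bar>"
proof (cases "k \<le> m")
  case True
  have "norm (w s k - w t k) \<le> 2 * Lam * norm (s - t)"
  proof (rule field_differentiable_bound[where S="{0..}" and f="\<lambda>s. w s k" and f'="\<lambda>x. f k x"])
    show "convex {0::real..}" by simp
    show "((\<lambda>s. w s k) has_field_derivative f k z) (at z within {0..})" if "z \<in> {0..}" for z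
      using deriv_w[of z k] that True k by auto
    show "norm (f k z) \<le> 2 * Lam" if "z \<in> {0..}" for z using f_le[of z k] that True k by auto
  qed (use s t in auto)
  thus ?thesis by simp
next
  case False thus ?thesis using w_zero s t Lam_nonneg by simp
qed

lemma N_lip: assumes s: "s \<ge> 0" and t: "t \<ge> 0"
  shows "\<bar>Nw s - Nw t\<bar> \<le> Lam * \<bar>s - t\<bar>"
proof -
  have "norm (Nw s - Nw t) \<le> Lam * norm (s - t)"
  proof (rule field_differentiable_bound[where S="{0..}" and f="Nw" and f'="\<lambda>x. - (\<Sum>k=1..m-1. jj k x)"])
    show "convex {0::real..}" by simp
    show "(Nw has_field_derivative - (\<Sum>k=1..m-1. jj k z)) (at z within {0..})" if "z \<in> {0..}" for z
      using N_deriv[of z] that by auto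
    show "norm (- (\<Sum>k=1..m-1. jj k z)) \<le> Lam" if "z \<in> {0..}" for z
      using order_trans[OF sum_abs[of "\<lambda>k. jj k z" "{1..m-1}"] sum_jj_le[of z]] that by auto
  qed (use s t in auto)
  thus ?thesis by simp
qed

end


context trunc begin

definition "Cq l = 2 * Cg * rh + Cg * real l * rh * (Cc + 1)"

lemma P_nonneg: assumes s: "s \<ge> 0" and l: "l \<in> {1..m}" shows "P l s \<ge> 0"
proof -
  have nn: "w s k \<ge> 0" if "k \<ge> 1" for k using nonneg_all s that by auto
  have gc: "\<gamma> k * c k \<ge> 0" "\<gamma> k \<ge> 0" if "k \<ge> 1" for k using g_pos c_pos that by (auto intro: less_imp_le)
  have N: "Nw s \<ge> 0" using N_nonneg s by auto
  show ?thesis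
  proof (cases "l = 1")
    case True
    have "0 \<le> \<gamma> 1 * c 1 * Nw s * w s 2" using gc[of 1] N nn[of 2] by simp
    moreover have "0 \<le> (\<Sum>k=1..m-1. \<gamma> k * c k * Nw s * w s (Suc k))"
      by (rule sum_nonneg) (use gc N nn in auto)
    ultimately show ?thesis using True by (simp add: P_def)
  next
    case False
    hence "l \<ge> 2" using l by auto
    have "0 \<le> \<gamma> (l-1) * w s 1 * w s (l-1)" using gc[of "l-1"] nn[of 1] nn[of "l-1"] \<open>l \<ge> 2\<close> by simp
    moreover have "0 \<le> \<gamma> l * c l * Nw s * w s (Suc l)" using gc[of l] N nn[of "Suc l"] \<open>l \<ge> 2\<close> by simp
    ultimately show ?thesis using False by (simp add: P_def)
  qed
qed

lemma Q_lower: assumes s: "s \<ge> 0" and l: "l \<in> {1..m}" shows "Q l s \<ge> - Cq l"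
proof -
  have nn: "w s k \<ge> 0" if "k \<ge> 1" for k using nonneg_all s that by auto
  have Cqa: "0 \<le> Cg * real l * rh * (Cc + 1)" using Cg rh_pos Cc by simp
  show ?thesis
  proof (cases "l = 1")
    case True
    have a: "\<gamma> 1 * w s 1 \<le> Cg * rh"
    proof (rule mult_mono)
      show "\<gamma> 1 \<le> Cg" using g_le[of 1] by simp
      show "w s 1 \<le> rh" using w_le[OF s, of 1] by simp
    qed (use Cg nn[of 1] in auto)
    have b: "(\<Sum>k=1..m-1. \<gamma> k * w s k) \<le> (\<Sum>k=1..m. Cg * (real k * w s k))"
    proof -
      have "(\<Sum>k=1..m-1. \<gamma> k * w s k) \<le> (\<Sum>k=1..m-1. Cg * (real k * w s k))"
      proof (rule sum_mono)
        fix k assume "k \<in> {1..m-1}"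
        hence k: "k \<ge> 1" by auto
        have "\<gamma> k * w s k \<le> (Cg * real k) * w s k" using g_le[OF k] nn[OF k] by (intro mult_right_mono) auto
        thus "\<gamma> k * w s k \<le> Cg * (real k * w s k)" by simp
      qed
      also have "\<dots> \<le> (\<Sum>k=1..m. Cg * (real k * w s k))"
        by (rule sum_mono2) (use Cg nn in auto)
      finally show ?thesis .
    qed
    have "(\<Sum>k=1..m. Cg * (real k * w s k)) = Cg * (\<Sum>k=1..m. real k * w s k)" by (simp add: sum_distrib_left)
    also have "\<dots> \<le> Cg * rh" using mass_le[OF s] Cg by (intro mult_left_mono) auto
    finally have "(\<Sum>k=1..m-1. \<gamma> k * w s k) \<le> Cg * rh" using b by linarith
    thus ?thesis using a True Cqa by (simp add: Q_def Cq_def)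
  next
    case False
    hence l2: "l \<ge> 2" "l \<le> m" using l by auto
    have l1: "l - 1 \<ge> 1" using l2 by simp
    have a: "\<gamma> (l-1) * Nw s * c (l-1) \<le> (Cg * real l) * rh * Cc"
    proof -
      have "Cg * real (l-1) \<le> Cg * real l" using Cg by (intro mult_left_mono) auto
      moreover have "\<gamma> (l-1) \<le> Cg * real (l-1)" using g_le[OF l1] by simp
      ultimately have g1: "\<gamma> (l-1) \<le> Cg * real l" by linarith
      have g0: "0 \<le> \<gamma> (l-1)" using g_pos[OF l1] by simp
      have e1: "\<gamma> (l-1) * Nw s \<le> (Cg * real l) * rh"
        by (rule mult_mono[OF g1 N_le[OF s]]) (use Cg N_nonneg[OF s] in auto)
      have e2: "0 \<le> c (l-1)" "c (l-1) \<le> Cc" using c_pos[OF l1] c_le[OF l1] by auto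
      have e3: "0 \<le> (Cg * real l) * rh" using Cg rh_pos by simp
      show ?thesis using mult_mono[OF e1 e2(2) e3 e2(1)] by simp
    qed
    have b0: "\<gamma> l * w s 1 \<le> (Cg * real l) * rh"
      by (rule mult_mono[OF g_le[of l] w_le[OF s, of 1]]) (use l2 Cg nn[of 1] in auto)
    have b: "(if l < m then \<gamma> l * w s 1 else 0) \<le> (Cg * real l) * rh"
      using b0 Cg rh_pos by auto
    have "Q l s = - (\<gamma> (l-1) * Nw s * c (l-1)) - (if l < m then \<gamma> l * w s 1 else 0)"
      using False by (simp add: Q_def)
    moreover have "Cq l = 2 * Cg * rh + ((Cg * real l) * rh * Cc + (Cg * real l) * rh)"
      unfolding Cq_def by (simp add: algebra_simps)
    moreover have "0 \<le> 2 * Cg * rh" using Cg rh_pos by simp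
    ultimately show ?thesis using a b by linarith
  qed
qed

lemma f_lower: assumes s: "s \<ge> 0" and l: "l \<in> {1..m}"
  shows "f l s \<ge> - Cq l * w s l + P l s"
proof -
  have "w s l * Q l s \<ge> w s l * (- Cq l)"
    using Q_lower[OF s l] nonneg_w[OF s l] by (intro mult_left_mono) auto
  thus ?thesis using decomp[OF l, of s] by (simp add: algebra_simps)
qed

lemma pos_gen:
  assumes l: "l \<in> {1..m}" and t: "t > 0"
    and strict: "w 0 l > 0 \<or> (\<forall>s\<in>{0<..<t}. P l s > 0)"
  shows "w t l > 0"
proof (rule pos_grow[where g="\<lambda>s. w s l" and f="f l" and C="Cq l"])
  show "0 < t" by fact
  show "((\<lambda>s. w s l) has_real_derivative f l s) (at s within {0..t})" if "s \<in> {0..t}" for s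
    using DERIV_subset[OF deriv_w[of s l]] that l by auto
  show "f l s \<ge> - Cq l * w s l" if "s \<in> {0..t}" for s
    using f_lower[of s l] P_nonneg[of s l] that l by auto
  show "0 \<le> w 0 l" using nonneg_w l by auto
  show "0 < w 0 l \<or> (\<forall>s\<in>{0<..<t}. - Cq l * w s l < f l s)"
  proof (cases "w 0 l > 0")
    case False
    hence st: "\<forall>s\<in>{0<..<t}. P l s > 0" using strict by simp
    have "- Cq l * w s l < f l s" if "s \<in> {0<..<t}" for s
      using st f_lower[of s l] l that by force
    thus ?thesis by blast
  qed simp
qed

lemma pos_w1: "t \<ge> 0 \<Longrightarrow> w t 1 > 0"
proof -
  assume t: "t \<ge> 0"
  have "w 0 1 > 0" using w_init[of 1] y1 m2 by simp
  thus ?thesis using pos_gen[of 1 t] t m2 by (cases "t = 0") auto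
qed

lemma pos_w: "l \<in> {1..m} \<Longrightarrow> t > 0 \<Longrightarrow> w t l > 0"
proof (induction l arbitrary: t)
  case 0 thus ?case by simp
next
  case (Suc n)
  show ?case
  proof (cases "n = 0")
    case True thus ?thesis using pos_w1 Suc by simp
  next
    case False
    have "P (Suc n) s > 0" if "s \<in> {0<..<t}" for s
    proof -
      have s: "s > 0" using that by simp
      have "w s n > 0" using Suc.IH[OF _ s] False Suc.prems by simp
      moreover have "w s 1 > 0" using pos_w1 s by simp
      moreover have "\<gamma> n > 0" using g_pos False by simp
      ultimately have "\<gamma> (Suc n - 1) * w s 1 * w s (Suc n - 1) > 0" by simp
      moreover have "0 \<le> (if Suc n < m then \<gamma> (Suc n) * c (Suc n) * Nw s * w s (Suc (Suc n)) else 0)"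
        using g_pos[of "Suc n"] c_pos[of "Suc n"] N_nonneg[of s] nonneg_all[of s "Suc (Suc n)"] s by simp
      ultimately show ?thesis using False by (simp add: P_def)
    qed
    thus ?thesis using pos_gen[OF Suc.prems] by blast
  qed
qed

lemma N_pos: "t \<ge> 0 \<Longrightarrow> Nw t > 0"
proof -
  assume t: "t \<ge> 0"
  have "w t 1 \<le> Nw t" unfolding Nw_def by (rule member_le_sum) (use nonneg_all t m2 in auto)
  thus ?thesis using pos_w1[OF t] by simp
qed

end


lemma xlnx_deriv:
  assumes "(g has_real_derivative g') (at t)" "g t > 0"
  shows "((\<lambda>s. g s * ln (g s)) has_real_derivative g' * (ln (g t) + 1)) (at t)"
proof -
  have "((\<lambda>s. g s * ln (g s)) has_real_derivative g' * ln (g t) + (1 / g t * g') * g t) (at t)"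
    by (rule DERIV_mult[OF assms(1) DERIV_chain2[OF DERIV_ln_divide[OF assms(2)] assms(1)]])
  thus ?thesis using assms(2) by (simp add: algebra_simps)
qed

context trunc begin

definition "Ent t = (\<Sum>l=1..m. w t l * ln (w t l) - w t l * ln (q l)) - Nw t * ln (Nw t)"
definition "K0 = rh * rh + Lq * rh + rh + 1"

lemma deriv_at: "t > 0 \<Longrightarrow> l \<in> {1..m} \<Longrightarrow> ((\<lambda>s. w s l) has_real_derivative f l t) (at t)"
  using deriv_w[of t l] at_within_interior[of t "{0..}"] by simp

lemma Ent_deriv:
  assumes t: "t > 0"
  shows "(Ent has_real_derivative (\<Sum>l=1..m. f l t * (ln (w t l) - ln (q l) - ln (Nw t)))) (at t)"
proof -
  have dN: "(Nw has_real_derivative (\<Sum>l=1..m. f l t)) (at t)"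
    unfolding Nw_def[abs_def] by (rule DERIV_sum) (use deriv_at t in auto)
  have d1: "((\<lambda>s. \<Sum>l=1..m. w s l * ln (w s l) - w s l * ln (q l)) has_real_derivative
        (\<Sum>l=1..m. f l t * (ln (w t l) + 1) - f l t * ln (q l))) (at t)"
  proof (rule DERIV_sum)
    fix l assume l: "l \<in> {1..m}"
    show "((\<lambda>s. w s l * ln (w s l) - w s l * ln (q l)) has_real_derivative f l t * (ln (w t l) + 1) - f l t * ln (q l)) (at t)"
      by (rule DERIV_diff[OF xlnx_deriv[OF deriv_at[OF t l] pos_w[OF l t]] DERIV_cmult_right[OF deriv_at[OF t l]]])
  qed
  have d2: "((\<lambda>s. Nw s * ln (Nw s)) has_real_derivative (\<Sum>l=1..m. f l t) * (ln (Nw t) + 1)) (at t)"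
    by (rule xlnx_deriv[OF dN N_pos]) (use t in simp)
  have "(Ent has_real_derivative (\<Sum>l=1..m. f l t * (ln (w t l) + 1) - f l t * ln (q l)) - (\<Sum>l=1..m. f l t) * (ln (Nw t) + 1)) (at t)"
    unfolding Ent_def[abs_def] by (rule DERIV_diff[OF d1 d2])
  moreover have "(\<Sum>l=1..m. f l t * (ln (w t l) + 1) - f l t * ln (q l)) - (\<Sum>l=1..m. f l t) * (ln (Nw t) + 1)
      = (\<Sum>l=1..m. f l t * (ln (w t l) - ln (q l) - ln (Nw t)))"
    by (simp add: algebra_simps sum_subtractf sum.distrib sum_distrib_right sum_distrib_left)
  ultimately show ?thesis by simp
qed

lemma diss_term:
  assumes t: "t > 0" and k: "k \<in> {1..m-1}"
  defines "u \<equiv> \<lambda>l. ln (w t l) - ln (q l) - ln (Nw t)"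
  shows "jj k t * (u (Suc k) - u k - u 1) \<le> - ((J k t)^2 / Lam)"
proof -
  have k1: "k \<ge> 1" "k < m" using k m2 by auto
  have t0: "t \<ge> 0" using t by simp
  define a where "a = w t 1 * w t k"
  define b where "b = Nw t * c k * w t (Suc k)"
  have w1: "w t 1 > 0" using pos_w1 t0 by simp
  have wk: "w t k > 0" using pos_w[of k t] k1 t by simp
  have wk1: "w t (Suc k) > 0" using pos_w[of "Suc k" t] k1 t by simp
  have N: "Nw t > 0" using N_pos t0 by simp
  have ck: "c k > 0" using c_pos k1 by simp
  have qk: "q k > 0" "q (Suc k) > 0" using q_pos k1 by auto
  have a0: "a > 0" unfolding a_def using w1 wk by simp
  have b0: "b > 0" unfolding b_def using N ck wk1 by simp
  have g: "\<gamma> k > 0" using g_pos k1 by simp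
  have lna: "ln a = ln (w t 1) + ln (w t k)" unfolding a_def using w1 wk by (simp add: ln_mult)
  have lnc: "ln (c k) = ln (q k) - ln (q (Suc k))" unfolding c_def using qk by (simp add: ln_div)
  have lnb: "ln b = ln (Nw t) + ln (c k) + ln (w t (Suc k))" unfolding b_def using N ck wk1 by (simp add: ln_mult)
  have e1: "u (Suc k) - u k - u 1 = ln b - ln a"
    unfolding u_def lna lnb lnc using q1 by simp
  have e2: "jj k t = \<gamma> k * (a - b)" using k1 by (simp add: jj_def J_def a_def b_def)
  have eq: "jj k t * (u (Suc k) - u k - u 1) = - (\<gamma> k * ((a - b) * (ln a - ln b)))"
    by (simp only: e1 e2) (simp add: algebra_simps)
  have "\<gamma> k * ((a - b)^2 / (a + b)) \<le> \<gamma> k * ((a - b) * (ln a - ln b))"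
    using log_diss[OF a0 b0] g by (intro mult_left_mono) auto
  moreover have "\<gamma> k * ((a - b)^2 / (a + b)) = (J k t)^2 / Gk k t"
  proof -
    have ne: "\<gamma> k \<noteq> 0" "a + b \<noteq> 0" using g a0 b0 by auto
    have "(J k t)^2 / Gk k t = (\<gamma> k * (a-b))^2 / (\<gamma> k * (a+b))"
      by (simp add: J_def Gk_def a_def b_def)
    also have "\<dots> = (\<gamma> k * (\<gamma> k * (a-b)^2)) / (\<gamma> k * (a+b))"
      by (simp add: power2_eq_square algebra_simps)
    also have "\<dots> = \<gamma> k * (a-b)^2 / (a+b)" using ne by simp
    finally show ?thesis by simp
  qed
  moreover have "(J k t)^2 / Lam \<le> (J k t)^2 / Gk k t"
  proof (rule divide_left_mono)
    show "Gk k t \<le> Lam" using Gk_le_Lam t0 k1 by simp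
    show "0 < Lam * Gk k t" using Lam_pos g a0 b0
      unfolding Gk_def a_def[symmetric] b_def[symmetric] by simp
  qed simp
  ultimately show ?thesis using eq by linarith
qed

lemma Ent_deriv_le:
  assumes t: "t > 0" and l0: "l0 \<in> {1..m-1}"
  shows "(\<Sum>l=1..m. f l t * (ln (w t l) - ln (q l) - ln (Nw t))) \<le> - ((J l0 t)^2 / Lam)"
proof -
  define u where "u = (\<lambda>l. ln (w t l) - ln (q l) - ln (Nw t))"
  have "(\<Sum>l=1..m. f l t * (ln (w t l) - ln (q l) - ln (Nw t))) = (\<Sum>l=1..m. u l * f l t)"
    by (simp add: u_def mult.commute)
  also have "\<dots> = (\<Sum>k=1..m-1. jj k t * (u (Suc k) - u k - u 1))" by (rule sum_f)
  also have "\<dots> \<le> (\<Sum>k=1..m-1. - ((J k t)^2 / Lam))"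
    by (rule sum_mono) (use diss_term[OF t] in \<open>simp add: u_def\<close>)
  also have "\<dots> \<le> - ((J l0 t)^2 / Lam)"
  proof -
    have "(J l0 t)^2 / Lam \<le> (\<Sum>k=1..m-1. (J k t)^2 / Lam)"
      by (rule member_le_sum) (use l0 Lam_pos in auto)
    thus ?thesis by (simp add: sum_negf)
  qed
  finally show ?thesis .
qed

lemma ent_decr:
  assumes a: "0 < a" and ab: "a \<le> b" and l0: "l0 \<in> {1..m-1}"
    and J: "\<forall>s\<in>{a..b}. \<delta> \<le> (J l0 s)^2"
  shows "Ent b + \<delta> * (b - a) / Lam \<le> Ent a"
proof -
  define H where "H s = Ent s + \<delta> * s / Lam" for s
  have "H a \<ge> H b"
  proof (rule DERIV_nonpos_imp_nonincreasing[OF ab])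
    fix x assume x: "a \<le> x" "x \<le> b"
    hence x0: "x > 0" using a by simp
    have "(H has_real_derivative (\<Sum>l=1..m. f l x * (ln (w x l) - ln (q l) - ln (Nw x))) + \<delta> / Lam) (at x)"
      unfolding H_def[abs_def]
      by (rule DERIV_add[OF Ent_deriv[OF x0] DERIV_cdivide[OF DERIV_cmult_Id]])
    moreover have "(\<Sum>l=1..m. f l x * (ln (w x l) - ln (q l) - ln (Nw x))) + \<delta> / Lam \<le> 0"
    proof -
      have "\<delta> / Lam \<le> (J l0 x)^2 / Lam" using J x Lam_pos by (simp add: divide_right_mono)
      thus ?thesis using Ent_deriv_le[OF x0 l0] by linarith
    qed
    ultimately show "\<exists>y. (H has_real_derivative y) (at x) \<and> y \<le> 0" by blast
  qed
  thus ?thesis unfolding H_def by (simp add: diff_divide_distrib algebra_simps)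
qed

lemma Ent_bound: assumes t: "t \<ge> 0" shows "\<bar>Ent t\<bar> \<le> K0"
proof -
  have nn: "w t l \<ge> 0" if "l \<ge> 1" for l using nonneg_all t that by simp
  define A1 where "A1 = (\<Sum>l=1..m. w t l * ln (w t l))"
  define A2 where "A2 = (\<Sum>l=1..m. w t l * ln (q l))"
  have E: "Ent t = A1 - A2 - Nw t * ln (Nw t)"
    unfolding Ent_def A1_def A2_def by (simp add: sum_subtractf)
  have A1l: "A1 \<ge> - rh - 1"
  proof -
    have "A1 \<ge> (\<Sum>l=1..m. - (real l * w t l) - exp (- real l))"
      unfolding A1_def by (rule sum_mono) (use xlnx_lower nn in auto)
    also have "(\<Sum>l=1..m. - (real l * w t l) - exp (- real l)) = - (\<Sum>l=1..m. real l * w t l) - (\<Sum>l=1..m. exp (- real l))"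
      by (simp add: sum_subtractf sum_negf)
    finally show ?thesis using mass_le[OF t] sum_exp_neg_le[of m] by linarith
  qed
  have A1u: "A1 \<le> rh * rh"
  proof -
    have "A1 \<le> (\<Sum>l=1..m. w t l * rh)"
      unfolding A1_def by (rule sum_mono) (use xlnx_upper nn w_le t in auto)
    also have "\<dots> = Nw t * rh" by (simp add: Nw_def sum_distrib_right)
    also have "\<dots> \<le> rh * rh" using N_le[OF t] rh_pos by (intro mult_right_mono) auto
    finally show ?thesis .
  qed
  have A2b: "\<bar>A2\<bar> \<le> Lq * rh"
  proof -
    have "\<bar>A2\<bar> \<le> (\<Sum>l=1..m. \<bar>w t l * ln (q l)\<bar>)" unfolding A2_def by (rule sum_abs)
    also have "\<dots> \<le> (\<Sum>l=1..m. Lq * (real l * w t l))"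
    proof (rule sum_mono)
      fix l assume "l \<in> {1..m}"
      hence l: "l \<ge> 1" by auto
      have "\<bar>w t l * ln (q l)\<bar> = w t l * \<bar>ln (q l)\<bar>" using nn[OF l] by (simp add: abs_mult)
      also have "\<dots> \<le> w t l * (Lq * real l)" using Lq l nn[OF l] by (intro mult_left_mono) auto
      finally show "\<bar>w t l * ln (q l)\<bar> \<le> Lq * (real l * w t l)" by (simp add: algebra_simps)
    qed
    also have "\<dots> = Lq * (\<Sum>l=1..m. real l * w t l)" by (simp add: sum_distrib_left)
    also have "\<dots> \<le> Lq * rh" using mass_le[OF t] Lq by (intro mult_left_mono) auto
    finally show ?thesis .
  qed
  have N3: "Nw t * ln (Nw t) \<ge> -1" using xlnx_ge_minus_one N_nonneg[OF t] by simp
  have N4: "Nw t * ln (Nw t) \<le> rh * rh"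
  proof -
    have "Nw t * ln (Nw t) \<le> Nw t * rh" using xlnx_upper N_nonneg[OF t] N_le[OF t] by simp
    also have "\<dots> \<le> rh * rh" using N_le[OF t] rh_pos by (intro mult_right_mono) auto
    finally show ?thesis .
  qed
  show ?thesis unfolding E K0_def using A1l A1u A2b N3 N4 rh_pos Lq by (simp add: abs_le_iff)
qed

end


lemma prod_diff: "\<bar>a * b - a' * b'\<bar> \<le> \<bar>a\<bar> * \<bar>b - b'\<bar> + \<bar>b'\<bar> * \<bar>a - a'\<bar>" for a b a' b' :: real
proof -
  have "a * b - a' * b' = a * (b - b') + b' * (a - a')" by (simp add: algebra_simps)
  hence "\<bar>a * b - a' * b'\<bar> \<le> \<bar>a * (b - b')\<bar> + \<bar>b' * (a - a')\<bar>" by simp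
  thus ?thesis by (simp add: abs_mult)
qed

context trunc begin

lemma ent_exists:
  "\<exists>E. (\<forall>t\<ge>0. \<bar>E t\<bar> \<le> rho y * rho y + Lq * rho y + rho y + 1) \<and>
     (\<forall>a b l0 \<delta>. 0 < a \<longrightarrow> a \<le> b \<longrightarrow> 1 \<le> l0 \<longrightarrow> l0 < m \<longrightarrow>
        (\<forall>s\<in>{a..b}. \<delta> \<le> (Jflux q \<gamma> (w s) l0)^2) \<longrightarrow>
        E b + \<delta> * (b - a) / (Cg * rho y * rho y * (1 + Cc)) \<le> E a)"
proof (rule exI[of _ Ent], intro conjI allI impI)
  fix t :: real assume "t \<ge> 0"
  thus "\<bar>Ent t\<bar> \<le> rho y * rho y + Lq * rho y + rho y + 1" using Ent_bound by (simp add: K0_def rh_def)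
next
  fix a b :: real and l0 :: nat and \<delta> :: real
  assume a: "0 < a" "a \<le> b" "1 \<le> l0" "l0 < m" and J: "\<forall>s\<in>{a..b}. \<delta> \<le> (Jflux q \<gamma> (w s) l0)^2"
  have "\<forall>s\<in>{a..b}. \<delta> \<le> (J l0 s)^2" using J Jflux_w a by auto
  from ent_decr[OF a(1,2) _ this] a
  show "Ent b + \<delta> * (b - a) / (Cg * rho y * rho y * (1 + Cc)) \<le> Ent a"
    by (simp add: Lam_def rh_def)
qed

lemma lip_J:
  assumes l0: "l0 \<ge> 1" and s: "s \<ge> 0" and t: "t \<ge> 0"
  shows "\<bar>Jflux q \<gamma> (w s) l0 - Jflux q \<gamma> (w t) l0\<bar>
     \<le> \<gamma> l0 * (4 * rho y * (Cg * rho y * rho y * (1 + Cc)) + 3 * Cc * rho y * (Cg * rho y * rho y * (1 + Cc))) * \<bar>s - t\<bar>"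
proof -
  define d where "d = \<bar>s - t\<bar>"
  have d0: "d \<ge> 0" by (simp add: d_def)
  have bw: "\<bar>w x k\<bar> \<le> rh" if "x \<ge> 0" "k \<ge> 1" for x k using nonneg_all w_le that by auto
  have bN: "\<bar>Nw x\<bar> \<le> rh" if "x \<ge> 0" for x using N_nonneg N_le that by auto
  have g: "0 \<le> \<gamma> l0" using g_pos l0 by (simp add: less_imp_le)
  have cc: "0 \<le> c l0" "c l0 \<le> Cc" using c_pos c_le l0 by (auto simp: less_imp_le)
  have A: "\<bar>w s 1 * w s l0 - w t 1 * w t l0\<bar> \<le> 4 * rh * Lam * d"
  proof -
    have "\<bar>w s 1 * w s l0 - w t 1 * w t l0\<bar> \<le> \<bar>w s 1\<bar> * \<bar>w s l0 - w t l0\<bar> + \<bar>w t l0\<bar> * \<bar>w s 1 - w t 1\<bar>"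
      by (rule prod_diff)
    also have "\<dots> \<le> rh * (2 * Lam * d) + rh * (2 * Lam * d)"
      by (intro add_mono mult_mono) (use bw s t l0 w_lip[OF s t] d_def rh_pos in auto)
    finally show ?thesis by (simp add: algebra_simps)
  qed
  have B: "\<bar>Nw s * w s (Suc l0) - Nw t * w t (Suc l0)\<bar> \<le> 3 * rh * Lam * d"
  proof -
    have "\<bar>Nw s * w s (Suc l0) - Nw t * w t (Suc l0)\<bar> \<le> \<bar>Nw s\<bar> * \<bar>w s (Suc l0) - w t (Suc l0)\<bar> + \<bar>w t (Suc l0)\<bar> * \<bar>Nw s - Nw t\<bar>"
      by (rule prod_diff)
    also have "\<dots> \<le> rh * (2 * Lam * d) + rh * (Lam * d)"
      by (intro add_mono mult_mono) (use bw bN s t w_lip[OF s t] N_lip[OF s t] d_def rh_pos in auto)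
    finally show ?thesis by (simp add: algebra_simps)
  qed
  have "Jflux q \<gamma> (w s) l0 - Jflux q \<gamma> (w t) l0
      = \<gamma> l0 * ((w s 1 * w s l0 - w t 1 * w t l0) - c l0 * (Nw s * w s (Suc l0) - Nw t * w t (Suc l0)))"
    using Jflux_w[OF s l0] Jflux_w[OF t l0] by (simp add: J_def algebra_simps)
  hence "\<bar>Jflux q \<gamma> (w s) l0 - Jflux q \<gamma> (w t) l0\<bar>
      = \<gamma> l0 * \<bar>(w s 1 * w s l0 - w t 1 * w t l0) - c l0 * (Nw s * w s (Suc l0) - Nw t * w t (Suc l0))\<bar>"
    using g by (simp add: abs_mult)
  also have "\<dots> \<le> \<gamma> l0 * (4 * rh * Lam * d + Cc * (3 * rh * Lam * d))"
  proof (rule mult_left_mono[OF _ g])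
    have "\<bar>c l0 * (Nw s * w s (Suc l0) - Nw t * w t (Suc l0))\<bar> \<le> Cc * (3 * rh * Lam * d)"
      unfolding abs_mult using cc B by (intro mult_mono) auto
    thus "\<bar>(w s 1 * w s l0 - w t 1 * w t l0) - c l0 * (Nw s * w s (Suc l0) - Nw t * w t (Suc l0))\<bar>
        \<le> 4 * rh * Lam * d + Cc * (3 * rh * Lam * d)" using A by linarith
  qed
  finally show ?thesis by (simp add: d_def rh_def Lam_def algebra_simps)
qed

lemma w_facts:
  assumes t: "t \<ge> 0"
  shows "(\<forall>k\<ge>1. 0 \<le> w t k) \<and> (\<forall>n. (\<Sum>k<n. real (Suc k) * w t (Suc k)) \<le> rho y)
     \<and> summable (\<lambda>k. w t (Suc k)) \<and> Ntot (w t) = (\<Sum>k. w t (Suc k))"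
proof (intro conjI allI impI)
  show "0 \<le> w t k" if "k \<ge> 1" for k using nonneg_all t that by simp
  show "summable (\<lambda>k. w t (Suc k))"
    by (rule summable_finite[of "{..<m}"]) (use w_zero t in auto)
  show "Ntot (w t) = (\<Sum>k. w t (Suc k))" by (simp add: Ntot_def)
  fix n
  have "(\<Sum>k<n. real (Suc k) * w t (Suc k)) = (\<Sum>l=1..n. real l * w t l)"
    by (simp only: sum_bounds_lt_plus1[where f="\<lambda>l. real l * w t l"])
  also have "\<dots> \<le> (\<Sum>l=1..max n m. real l * w t l)"
    by (rule sum_mono2) (use nonneg_all t in auto)
  also have "\<dots> = (\<Sum>l=1..m. real l * w t l)"
    by (rule sum.mono_neutral_right) (use w_zero t in auto)
  also have "\<dots> \<le> rho y" using mass_le[OF t] by (simp add: rh_def)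
  finally show "(\<Sum>k<n. real (Suc k) * w t (Suc k)) \<le> rho y" .
qed

end


lemma tail_bound:
  fixes x :: "nat \<Rightarrow> real"
  assumes nn: "\<forall>k. x k \<ge> 0" and summ: "summable x"
    and mass: "\<forall>n. (\<Sum>k<n. real (Suc k) * x k) \<le> \<rho>"
  shows "(\<Sum>k<L. x k) \<le> suminf x \<and> suminf x \<le> (\<Sum>k<L. x k) + \<rho> / (real L + 1)"
proof
  show "(\<Sum>k<L. x k) \<le> suminf x" by (rule sum_le_suminf[OF summ]) (use nn in auto)
  show "suminf x \<le> (\<Sum>k<L. x k) + \<rho> / (real L + 1)"
  proof (rule suminf_le_const[OF summ])
    fix n
    have r0: "\<rho> \<ge> 0" using mass[rule_format, of 0] by simp
    show "(\<Sum>k<n. x k) \<le> (\<Sum>k<L. x k) + \<rho> / (real L + 1)"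
    proof (cases "n \<le> L")
      case True
      have "(\<Sum>k<n. x k) \<le> (\<Sum>k<L. x k)" by (rule sum_mono2) (use True nn in auto)
      thus ?thesis using r0 by (simp add: add_increasing2)
    next
      case False
      have split: "(\<Sum>k<n. x k) = (\<Sum>k<L. x k) + (\<Sum>k\<in>{L..<n}. x k)"
        using False by (simp add: sum.atLeastLessThan_concat[symmetric] lessThan_atLeast0 sum_diff_nat_ivl)
      have "(real L + 1) * (\<Sum>k\<in>{L..<n}. x k) = (\<Sum>k\<in>{L..<n}. (real L + 1) * x k)" by (simp add: sum_distrib_left)
      also have "\<dots> \<le> (\<Sum>k\<in>{L..<n}. real (Suc k) * x k)"
        by (rule sum_mono) (use nn in \<open>auto intro!: mult_right_mono\<close>)
      also have "\<dots> \<le> (\<Sum>k<n. real (Suc k) * x k)"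
        by (rule sum_mono2) (use nn in auto)
      also have "\<dots> \<le> \<rho>" using mass by simp
      finally have "(\<Sum>k\<in>{L..<n}. x k) \<le> \<rho> / (real L + 1)" by (simp add: field_simps)
      thus ?thesis using split by simp
    qed
  qed
qed

lemma tight_conv:
  fixes a :: "nat \<Rightarrow> nat \<Rightarrow> real" and b :: "nat \<Rightarrow> real"
  assumes conv: "\<forall>k. (\<lambda>j. a j k) \<longlonglongrightarrow> b k"
    and nn: "\<forall>j k. a j k \<ge> 0" and bnn: "\<forall>k. b k \<ge> 0"
    and summ: "\<forall>j. summable (a j)" and summb: "summable b"
    and mass: "\<forall>j n. (\<Sum>k<n. real (Suc k) * a j k) \<le> \<rho>"
    and massb: "\<forall>n. (\<Sum>k<n. real (Suc k) * b k) \<le> \<rho>"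
  shows "(\<lambda>j. suminf (a j)) \<longlonglongrightarrow> suminf b"
proof (rule LIMSEQ_I)
  fix e :: real assume e: "e > 0"
  have r0: "\<rho> \<ge> 0" using massb[rule_format, of 0] by simp
  obtain L :: nat where L: "real L > 3 * \<rho> / e" using reals_Archimedean2 by blast
  have Lb: "\<rho> / (real L + 1) < e / 3"
  proof -
    have "3 * \<rho> < e * (real L + 1)" using L e by (simp add: field_simps)
    thus ?thesis by (simp add: field_simps)
  qed
  have "(\<lambda>j. \<Sum>k<L. a j k) \<longlonglongrightarrow> (\<Sum>k<L. b k)"
    by (rule tendsto_sum) (use conv in auto)
  from LIMSEQ_D[OF this, of "e/3"] e obtain N where N: "\<forall>j\<ge>N. norm ((\<Sum>k<L. a j k) - (\<Sum>k<L. b k)) < e/3"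
    by auto
  have "norm (suminf (a j) - suminf b) < e" if "j \<ge> N" for j
  proof -
    have A: "(\<Sum>k<L. a j k) \<le> suminf (a j) \<and> suminf (a j) \<le> (\<Sum>k<L. a j k) + \<rho> / (real L + 1)"
      by (rule tail_bound) (use nn summ mass in auto)
    have B: "(\<Sum>k<L. b k) \<le> suminf b \<and> suminf b \<le> (\<Sum>k<L. b k) + \<rho> / (real L + 1)"
      by (rule tail_bound) (use bnn summb massb in auto)
    have "\<bar>(\<Sum>k<L. a j k) - (\<Sum>k<L. b k)\<bar> < e/3" using N that by simp
    note X0 = abs_less_iff[THEN iffD1, OF this]
    have X: "(\<Sum>k<L. a j k) - (\<Sum>k<L. b k) < e/3" "(\<Sum>k<L. b k) - (\<Sum>k<L. a j k) < e/3"
      using conjunct1[OF X0] conjunct2[OF X0] by linarith+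
    have "suminf (a j) - suminf b < e" using X A B Lb by linarith
    moreover have "suminf b - suminf (a j) < e" using X A B Lb by linarith
    ultimately show ?thesis by (simp add: abs_less_iff)
  qed
  thus "\<exists>no. \<forall>n\<ge>no. norm (suminf (a n) - suminf b) < e" by blast
qed

lemma const_Cg:
  assumes "(\<lambda>l. \<gamma> l / real l) \<longlonglongrightarrow> 0" "\<forall>l\<ge>1. \<gamma> l > 0"
  shows "\<exists>Cg>0. \<forall>l\<ge>1. \<gamma> l \<le> Cg * real l"
proof -
  obtain K where K: "K > 0" "\<forall>n. norm (\<gamma> n / real n) \<le> K"
    using convergent_imp_Bseq[OF convergentI[OF assms(1)]] unfolding Bseq_def by auto
  have "\<gamma> l \<le> K * real l" if "l \<ge> 1" for l
  proof -
    have "\<gamma> l / real l \<le> K" using K(2)[rule_format, of l] abs_ge_self[of "\<gamma> l / real l"]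
      unfolding real_norm_def by linarith
    thus ?thesis using that by (simp add: divide_le_eq)
  qed
  thus ?thesis using K by blast
qed

lemma const_c:
  fixes q :: "nat \<Rightarrow> real"
  assumes lim: "(\<lambda>l. q l / q (Suc l)) \<longlonglongrightarrow> R" and R: "R > 0" and qp: "\<forall>l\<ge>1. q l > 0"
  shows "\<exists>cm Cc. 0 < cm \<and> (\<forall>l\<ge>1. cm \<le> q l / q (Suc l) \<and> q l / q (Suc l) \<le> Cc)"
proof -
  obtain K where K: "K > 0" "\<forall>n. norm (q n / q (Suc n)) \<le> K"
    using convergent_imp_Bseq[OF convergentI[OF lim]] unfolding Bseq_def by auto
  have "eventually (\<lambda>l. R/2 < q l / q (Suc l)) sequentially"
    by (rule order_tendstoD(1)[OF lim]) (use R in simp)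
  then obtain N where N: "\<forall>l\<ge>N. R/2 < q l / q (Suc l)" by (auto simp: eventually_sequentially)
  define S where "S = insert (R/2) ((\<lambda>l. q l / q (Suc l)) ` {1..N})"
  have finS: "finite S" "S \<noteq> {}" by (auto simp: S_def)
  have Spos: "\<forall>x\<in>S. x > 0" using R qp by (auto simp: S_def)
  have "Min S > 0" using finS Spos by (simp add: Min_gr_iff)
  moreover have "Min S \<le> q l / q (Suc l)" if "l \<ge> 1" for l
  proof (cases "l \<le> N")
    case True
    hence "q l / q (Suc l) \<in> S" using that by (auto simp: S_def)
    thus ?thesis using finS by simp
  next
    case False
    hence "R/2 < q l / q (Suc l)" using N by simp
    moreover have "Min S \<le> R/2" using Min_le[OF finS(1), of "R/2"] by (simp add: S_def)
    ultimately show ?thesis by linarith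
  qed
  moreover have "q l / q (Suc l) \<le> K" for l using K(2)[rule_format, of l] abs_ge_self[of "q l / q (Suc l)"]
    unfolding real_norm_def by linarith
  ultimately show ?thesis by blast
qed

lemma const_Lq:
  fixes q :: "nat \<Rightarrow> real"
  assumes q1: "q 1 = 1" and qp: "\<forall>l\<ge>1. q l > 0" and cm: "cm > 0"
    and cb: "\<forall>l\<ge>1. cm \<le> q l / q (Suc l) \<and> q l / q (Suc l) \<le> Cc"
  shows "\<exists>Lq\<ge>0. \<forall>l\<ge>1. \<bar>ln (q l)\<bar> \<le> Lq * real l"
proof -
  define Lc where "Lc = \<bar>ln cm\<bar> + \<bar>ln Cc\<bar>"
  have Lc0: "Lc \<ge> 0" by (simp add: Lc_def)
  have lnc: "\<bar>ln (q l) - ln (q (Suc l))\<bar> \<le> Lc" if "l \<ge> 1" for l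
  proof -
    have pos: "q l > 0" "q (Suc l) > 0" using qp that by auto
    have c: "cm \<le> q l / q (Suc l)" "q l / q (Suc l) \<le> Cc" using cb that by auto
    have "ln (q l / q (Suc l)) = ln (q l) - ln (q (Suc l))" using pos by (simp add: ln_div)
    moreover have "ln cm \<le> ln (q l / q (Suc l))" using c cm pos by simp
    moreover have "ln (q l / q (Suc l)) \<le> ln Cc" using c cm pos by (subst ln_le_cancel_iff) auto
    ultimately show ?thesis unfolding Lc_def by linarith
  qed
  have ind: "\<bar>ln (q l)\<bar> \<le> Lc * real (l - 1)" if "l \<ge> 1" for l
    using that
  proof (induction l rule: dec_induct)
    case base thus ?case using q1 by simp
  next
    case (step n)
    have "\<bar>ln (q (Suc n))\<bar> \<le> \<bar>ln (q n)\<bar> + \<bar>ln (q n) - ln (q (Suc n))\<bar>" by linarith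
    also have "\<dots> \<le> Lc * real (n - 1) + Lc" using step lnc by (intro add_mono) auto
    also have "\<dots> = Lc * real (Suc n - 1)" using step(1) by (simp add: of_nat_diff algebra_simps)
    finally show ?case .
  qed
  have "\<bar>ln (q l)\<bar> \<le> Lc * real l" if "l \<ge> 1" for l
  proof -
    have "Lc * real (l - 1) \<le> Lc * real l" using Lc0 by (intro mult_left_mono) auto
    thus ?thesis using ind[OF that] by linarith
  qed
  thus ?thesis using Lc0 by blast
qed



theorem lemma15:
  fixes q \<gamma> y :: "nat \<Rightarrow> real" and R :: real and z :: "real \<Rightarrow> nat \<Rightarrow> real"
  assumes q_pos: "\<forall>l\<ge>1. q l > 0"
    and q1: "q 1 = 1"
    and R_lim: "(\<lambda>l. q l / q (Suc l)) \<longlonglongrightarrow> R"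
    and R_pos: "0 < R"
    and gamma_pos: "\<forall>l\<ge>1. \<gamma> l > 0"
    and gamma_lim: "(\<lambda>l. \<gamma> l / real l) \<longlonglongrightarrow> 0"
    and y_X: "inX y"
    and y_nonneg: "\<forall>l\<ge>1. y l \<ge> 0"
    and y1: "y 1 > 0"
    and rho0: "rho y > 0"
    and z_sol: "trunc_limit_solution q \<gamma> y z"
    and z_nonneg: "\<forall>t\<ge>0. \<forall>l\<ge>1. z t l \<ge> 0"
  shows "\<forall>l. ((\<lambda>t. Jflux q \<gamma> (z t) l) \<longlongrightarrow> 0) at_top"
proof -
  obtain Cg where Cg: "Cg > 0" "\<forall>l\<ge>1. \<gamma> l \<le> Cg * real l" using const_Cg[OF gamma_lim gamma_pos] by blast
  obtain cm Cc where cc: "0 < cm" "\<forall>l\<ge>1. cm \<le> q l / q (Suc l) \<and> q l / q (Suc l) \<le> Cc"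
    using const_c[OF R_lim R_pos q_pos] by blast
  have Cc0: "Cc \<ge> 0" using cc(1) cc(2)[rule_format, of 1] by simp
  obtain Lq where Lq: "Lq \<ge> 0" "\<forall>l\<ge>1. \<bar>ln (q l)\<bar> \<le> Lq * real l"
    using const_Lq[OF q1 q_pos cc(1) cc(2)] by blast
  obtain zs r where zX: "\<forall>t\<ge>0. inX (z t)" and zs: "\<forall>m\<ge>2. trunc_solution q \<gamma> y m (zs m)"
    and r: "strict_mono r" "\<forall>j. 2 \<le> r j"
    and ul: "\<forall>l\<ge>1. \<forall>T\<ge>0. uniform_limit {0..T} (\<lambda>j t. zs (r j) t l) (\<lambda>t. z t l) sequentially"
    using z_sol unfolding trunc_limit_solution_def by blast
  have tr: "trunc q \<gamma> y (r j) (zs (r j)) Cg Cc Lq" for j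
    unfolding trunc_def using r zs q_pos q1 gamma_pos y_nonneg y1 y_X Cg Cc0 cc Lq by auto
  have conv: "(\<lambda>j. zs (r j) t k) \<longlonglongrightarrow> z t k" if "t \<ge> 0" "k \<ge> 1" for t k
    using tendsto_uniform_limitI[OF ul[rule_format, OF that(2) that(1)], of t] that by simp
  have wf: "(\<forall>k\<ge>1. 0 \<le> zs (r j) t k) \<and> (\<forall>n. (\<Sum>k<n. real (Suc k) * zs (r j) t (Suc k)) \<le> rho y)
     \<and> summable (\<lambda>k. zs (r j) t (Suc k)) \<and> Ntot (zs (r j) t) = (\<Sum>k. zs (r j) t (Suc k))" if "t \<ge> 0" for t j
    using trunc.w_facts[OF tr that] by blast
  have zmass: "(\<Sum>k<n. real (Suc k) * z t (Suc k)) \<le> rho y" if t: "t \<ge> 0" for t n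
  proof -
    have "(\<lambda>j. \<Sum>k<n. real (Suc k) * zs (r j) t (Suc k)) \<longlonglongrightarrow> (\<Sum>k<n. real (Suc k) * z t (Suc k))"
      by (intro tendsto_sum tendsto_mult_left conv t) simp
    moreover have "\<forall>j. (\<Sum>k<n. real (Suc k) * zs (r j) t (Suc k)) \<le> rho y" using wf[OF t] by blast
    ultimately show ?thesis by (intro LIMSEQ_le_const2) auto
  qed
  have zsummw: "summable (\<lambda>k. real (Suc k) * z t (Suc k))" if t: "t \<ge> 0" for t
  proof -
    have "summable (\<lambda>k. real (Suc k) * \<bar>z t (Suc k)\<bar>)" using zX t by (simp add: inX_def)
    moreover have "\<bar>z t (Suc k)\<bar> = z t (Suc k)" for k using z_nonneg t by simp
    ultimately show ?thesis by simp
  qed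
  have zsumm: "summable (\<lambda>k. z t (Suc k))" if t: "t \<ge> 0" for t
  proof (rule summable_comparison_test[OF _ zsummw[OF t]])
    show "\<exists>N. \<forall>n\<ge>N. norm (z t (Suc n)) \<le> real (Suc n) * z t (Suc n)"
    proof (intro exI allI impI)
      fix n :: nat
      have "z t (Suc n) \<ge> 0" using z_nonneg t by simp
      thus "norm (z t (Suc n)) \<le> real (Suc n) * z t (Suc n)" by (simp add: mult_le_cancel_right1)
    qed
  qed
  have Nconv: "(\<lambda>j. Ntot (zs (r j) t)) \<longlonglongrightarrow> Ntot (z t)" if t: "t \<ge> 0" for t
    unfolding Ntot_def
    by (rule tight_conv[where \<rho>="rho y"]) (use conv t wf[OF t] z_nonneg zsumm[OF t] zmass[OF t] in auto)
  have Jconv: "(\<lambda>j. Jflux q \<gamma> (zs (r j) t) l0) \<longlonglongrightarrow> Jflux q \<gamma> (z t) l0" if t: "t \<ge> 0" and l0: "l0 \<ge> 1" for t l0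
    unfolding Jflux_def using l0
    by (simp, intro tendsto_intros conv Nconv t) (use q_pos[rule_format, of "Suc l0"] in auto)

  have Lam0: "Cg * rho y * rho y * (1 + Cc) > 0" using Cg rho0 Cc0 by simp
  have pos_case: "((\<lambda>t. Jflux q \<gamma> (z t) l0) \<longlongrightarrow> 0) at_top" if l0: "l0 \<ge> 1" for l0
  proof (rule ccontr)
    define \<Lambda> where "\<Lambda> = Cg * rho y * rho y * (1 + Cc)"
    define K where "K = rho y * rho y + Lq * rho y + rho y + 1"
    define LJ where "LJ = \<gamma> l0 * (4 * rho y * \<Lambda> + 3 * Cc * rho y * \<Lambda>)"
    define g where "g t = Jflux q \<gamma> (z t) l0" for t
    define G where "G j t = Jflux q \<gamma> (zs (r j) t) l0" for j t
    have Lpos: "\<Lambda> > 0" using Lam0 by (simp add: \<Lambda>_def)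
    have LJ0: "LJ \<ge> 0" unfolding LJ_def using gamma_pos l0 Lpos rho0 Cc0 by (simp add: less_imp_le)
    have "\<forall>j. \<exists>E. (\<forall>t\<ge>0. \<bar>E t\<bar> \<le> K) \<and>
     (\<forall>a b l \<delta>. 0 < a \<longrightarrow> a \<le> b \<longrightarrow> 1 \<le> l \<longrightarrow> l < r j \<longrightarrow>
        (\<forall>s\<in>{a..b}. \<delta> \<le> (Jflux q \<gamma> (zs (r j) s) l)^2) \<longrightarrow>
        E b + \<delta> * (b - a) / \<Lambda> \<le> E a)"
      using trunc.ent_exists[OF tr] unfolding K_def \<Lambda>_def by blast
    then obtain E where E: "\<forall>j. (\<forall>t\<ge>0. \<bar>E j t\<bar> \<le> K) \<and>
     (\<forall>a b l \<delta>. 0 < a \<longrightarrow> a \<le> b \<longrightarrow> 1 \<le> l \<longrightarrow> l < r j \<longrightarrow>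
        (\<forall>s\<in>{a..b}. \<delta> \<le> (Jflux q \<gamma> (zs (r j) s) l)^2) \<longrightarrow>
        E j b + \<delta> * (b - a) / \<Lambda> \<le> E j a)"
      by metis
    have Eb: "\<bar>E j t\<bar> \<le> K" if "t \<ge> 0" for j t using E that by blast
    have Ed: "E j b + \<delta> * (b - a) / \<Lambda> \<le> E j a"
      if "0 < a" "a \<le> b" "l0 < r j" "\<forall>s\<in>{a..b}. \<delta> \<le> (G j s)^2" for j a b \<delta>
      using E that l0 unfolding G_def by blast
    have lipG: "\<bar>G j s - G j t\<bar> \<le> LJ * \<bar>s - t\<bar>" if "s \<ge> 0" "t \<ge> 0" for j s t
      using trunc.lip_J[OF tr l0 that] unfolding G_def LJ_def \<Lambda>_def by simp
    have GJ: "(\<lambda>j. G j t) \<longlonglongrightarrow> g t" if "t \<ge> 0" for t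
      unfolding G_def g_def using Jconv[OF that l0] .
    assume nt: "\<not> ((\<lambda>t. Jflux q \<gamma> (z t) l0) \<longlongrightarrow> 0) at_top"
    have "\<exists>e>0. \<forall>T. \<exists>t\<ge>T. e \<le> \<bar>g t\<bar>"
    proof -
      from nt have "\<not> (\<forall>e>0. \<exists>N. \<forall>n\<ge>N. \<bar>g n - 0\<bar> < e)"
        unfolding g_def tendsto_iff eventually_at_top_linorder dist_real_def .
      then obtain e where e: "e > 0" "\<not> (\<exists>N. \<forall>n\<ge>N. \<bar>g n\<bar> < e)" by auto
      have "\<forall>T. \<exists>t\<ge>T. e \<le> \<bar>g t\<bar>"
      proof
        fix T
        from e(2) obtain t where "t \<ge> T" "\<not> \<bar>g t\<bar> < e" by blast
        thus "\<exists>t\<ge>T. e \<le> \<bar>g t\<bar>" by (auto simp: not_less)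
      qed
      thus ?thesis using e(1) by blast
    qed
    then obtain \<epsilon> where \<epsilon>: "\<epsilon> > 0" "\<forall>T. \<exists>t\<ge>T. \<epsilon> \<le> \<bar>g t\<bar>" by blast
    define h where "h = \<epsilon> / (2 * (LJ + 1))"
    define \<delta> where "\<delta> = (\<epsilon> / 4)^2"
    define c0 where "c0 = \<delta> * h / \<Lambda>"
    have h0: "h > 0" unfolding h_def using \<epsilon> LJ0 by simp
    have LJh: "LJ * h \<le> \<epsilon> / 2"
    proof -
      have "LJ * h = (LJ / (LJ + 1)) * (\<epsilon> / 2)" unfolding h_def using LJ0 by (simp add: field_simps)
      also have "\<dots> \<le> 1 * (\<epsilon> / 2)" using LJ0 \<epsilon> by (intro mult_right_mono) auto
      finally show ?thesis by simp
    qed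
    have c00: "c0 > 0" unfolding c0_def \<delta>_def using \<epsilon> h0 Lpos by simp
    have rj: "j \<le> r j" for j using seq_suble[OF r(1)] by simp
    have step: "\<exists>a b j0. 1 \<le> a \<and> a \<le> b \<and> (\<forall>j\<ge>j0. l0 < r j \<and> E j b + real n * c0 \<le> E j a)" for n
    proof (induction n)
      case 0
      show ?case
        by (rule exI[of _ 1], rule exI[of _ 1], rule exI[of _ "Suc l0"]) (use rj in \<open>auto intro: less_le_trans\<close>)
    next
      case (Suc n)
      then obtain a b j0 where ab: "1 \<le> a" "a \<le> b" "\<forall>j\<ge>j0. l0 < r j \<and> E j b + real n * c0 \<le> E j a" by blast
      obtain t where t: "t \<ge> b" "\<epsilon> \<le> \<bar>g t\<bar>" using \<epsilon>(2) by blast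
      have t0: "t \<ge> 0" "t > 0" using t ab by auto
      obtain j1 where j1: "\<forall>j\<ge>j1. norm (G j t - g t) < \<epsilon> / 4"
        using LIMSEQ_D[OF GJ[OF t0(1)], of "\<epsilon>/4"] \<epsilon> by auto
      have "\<forall>j\<ge>max j0 j1. l0 < r j \<and> E j (t + h) + real (Suc n) * c0 \<le> E j a"
      proof (intro allI impI conjI)
        fix j assume j: "j \<ge> max j0 j1"
        show lr: "l0 < r j" using ab j by auto
        have "\<bar>G j t - g t\<bar> < \<epsilon> / 4" using j1 j by auto
        hence Gt: "\<bar>G j t\<bar> \<ge> 3 * \<epsilon> / 4" using t(2) by linarith
        have "\<forall>s\<in>{t..t+h}. \<delta> \<le> (G j s)^2"
        proof
          fix s assume s: "s \<in> {t..t+h}"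
          have "\<bar>G j s - G j t\<bar> \<le> LJ * \<bar>s - t\<bar>" using lipG[of s t j] s t0 by auto
          also have "\<dots> \<le> LJ * h" using s LJ0 by (intro mult_left_mono) auto
          finally have "\<bar>G j s\<bar> \<ge> \<epsilon> / 4" using Gt LJh by linarith
          hence "(\<epsilon> / 4)^2 \<le> \<bar>G j s\<bar>^2" using \<epsilon> by (intro power_mono) auto
          thus "\<delta> \<le> (G j s)^2" by (simp add: \<delta>_def)
        qed
        from Ed[OF t0(2) _ lr this] h0
        have e1: "E j (t + h) + c0 \<le> E j t" by (simp add: c0_def)
        have e2: "E j t \<le> E j b"
          using Ed[of b t j 0] ab t lr by simp
        have e3: "E j b + real n * c0 \<le> E j a" using ab j by auto
        show "E j (t + h) + real (Suc n) * c0 \<le> E j a" using e1 e2 e3 by (simp add: algebra_simps)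
      qed
      moreover have "1 \<le> a" "a \<le> t + h" using ab t h0 by auto
      ultimately show ?case by blast
    qed
    obtain n :: nat where n: "2 * K < real n * c0" using ex_less_of_nat_mult[OF c00] by blast
    obtain a b j0 where ab: "1 \<le> a" "a \<le> b" "\<forall>j\<ge>j0. l0 < r j \<and> E j b + real n * c0 \<le> E j a"
      using step by blast
    have "E j0 b + real n * c0 \<le> E j0 a" using ab by blast
    moreover have "\<bar>E j0 a\<bar> \<le> K" "\<bar>E j0 b\<bar> \<le> K" using Eb ab by auto
    ultimately show False using n by linarith
  qed

  have shift_le: "(\<Sum>k<n. a (k + p)) \<le> \<rho>'" if "\<forall>k. a k \<ge> 0" "\<forall>n. (\<Sum>k<n. a k) \<le> \<rho>'"
    for a :: "nat \<Rightarrow> real" and n p \<rho>'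
  proof -
    have "(\<Sum>k<n. a (k + p)) = (\<Sum>k\<in>{0+p..<n+p}. a k)"
      by (simp only: sum.shift_bounds_nat_ivl lessThan_atLeast0)
    also have "\<dots> \<le> (\<Sum>k<n+p. a k)" by (rule sum_mono2) (use that in auto)
    also have "\<dots> \<le> \<rho>'" using that by blast
    finally show ?thesis .
  qed
  have zero_case: "((\<lambda>t. Jflux q \<gamma> (z t) 0) \<longlongrightarrow> 0) at_top"
  proof -
    define F where "F t k = Jflux q \<gamma> (z t) (Suc k)" for t k
    define A where "A t k = real (Suc k) * z t (Suc k)" for t k
    have J0: "Jflux q \<gamma> (z t) 0 = - suminf (F t)" for t by (simp add: F_def[abs_def] Jflux_def)
    have Ann: "A t k \<ge> 0" if "t \<ge> 0" for t k using z_nonneg that by (simp add: A_def)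
    have Amass: "(\<Sum>k<n. A t k) \<le> rho y" if "t \<ge> 0" for t n using zmass[OF that] by (simp add: A_def)
    have Asum: "summable (A t)" if "t \<ge> 0" for t using zsummw[OF that] by (simp add: A_def[abs_def])
    have z1: "z t 1 \<le> rho y" "0 \<le> z t 1" if "t \<ge> 0" for t
      using zmass[OF that, of 1] z_nonneg that by auto
    have NZ: "Ntot (z t) \<le> rho y" "0 \<le> Ntot (z t)" if t: "t \<ge> 0" for t
    proof -
      show "Ntot (z t) \<le> rho y" unfolding Ntot_def
      proof (rule suminf_le_const[OF zsumm[OF t]])
        fix n
        have "(\<Sum>k<n. z t (Suc k)) \<le> (\<Sum>k<n. real (Suc k) * z t (Suc k))"
        proof (rule sum_mono)
          fix k
          have "z t (Suc k) \<ge> 0" using z_nonneg t by simp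
          thus "z t (Suc k) \<le> real (Suc k) * z t (Suc k)" by (simp add: mult_le_cancel_right1)
        qed
        thus "(\<Sum>k<n. z t (Suc k)) \<le> rho y" using zmass[OF t, of n] by linarith
      qed
      show "0 \<le> Ntot (z t)" unfolding Ntot_def by (rule suminf_nonneg[OF zsumm[OF t]]) (use z_nonneg t in auto)
    qed
    have Fb: "\<bar>F t k\<bar> \<le> \<eta> * rho y * (A t k + Cc * A t (Suc k))"
      if t: "t \<ge> 0" and g: "\<gamma> (Suc k) \<le> \<eta> * real (Suc k)" for t k \<eta>
    proof -
      have gp: "0 \<le> \<gamma> (Suc k)" using gamma_pos by (simp add: less_imp_le)
      have cpos: "0 \<le> q (Suc k) / q (Suc (Suc k))" "q (Suc k) / q (Suc (Suc k)) \<le> Cc"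
        using q_pos cc(2)[rule_format, of "Suc k"] by (auto simp: less_imp_le)
      have zk: "0 \<le> z t (Suc k)" "0 \<le> z t (Suc (Suc k))" using z_nonneg t by auto
      have p1: "z t 1 * z t (Suc k) \<le> rho y * z t (Suc k)" using z1[OF t] zk by (intro mult_right_mono) auto
      have p2: "Ntot (z t) * (q (Suc k) / q (Suc (Suc k))) * z t (Suc (Suc k)) \<le> rho y * Cc * z t (Suc (Suc k))"
        using NZ[OF t] cpos zk rho0 by (intro mult_right_mono mult_mono) auto
      have n1: "0 \<le> z t 1 * z t (Suc k)" using z1[OF t] zk by simp
      have n2: "0 \<le> Ntot (z t) * (q (Suc k) / q (Suc (Suc k))) * z t (Suc (Suc k))"
        by (intro mult_nonneg_nonneg) (use NZ[OF t] cpos zk in auto)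
      have "\<bar>F t k\<bar> = \<gamma> (Suc k) * \<bar>z t 1 * z t (Suc k) - Ntot (z t) * (q (Suc k) / q (Suc (Suc k))) * z t (Suc (Suc k))\<bar>"
        using gp by (simp add: F_def Jflux_def abs_mult)
      also have "\<dots> \<le> \<gamma> (Suc k) * (rho y * z t (Suc k) + rho y * Cc * z t (Suc (Suc k)))"
        using p1 p2 n1 n2 gp by (intro mult_left_mono) auto
      also have "\<dots> \<le> (\<eta> * real (Suc k)) * (rho y * z t (Suc k) + rho y * Cc * z t (Suc (Suc k)))"
        using g rho0 Cc0 zk by (intro mult_right_mono) auto
      also have "\<dots> = \<eta> * rho y * (A t k + Cc * (real (Suc k) * z t (Suc (Suc k))))"
        by (simp add: A_def algebra_simps)
      also have "\<dots> \<le> \<eta> * rho y * (A t k + Cc * A t (Suc k))"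
      proof -
        have "real (Suc k) * z t (Suc (Suc k)) \<le> A t (Suc k)" unfolding A_def using zk by (intro mult_right_mono) auto
        moreover have "0 \<le> \<eta>" using g gp by (smt (verit) of_nat_0_le_iff zero_le_mult_iff of_nat_Suc)
        ultimately show ?thesis using Cc0 rho0 by (intro mult_left_mono add_left_mono) auto
      qed
      finally show ?thesis .
    qed
    have Fabs_summ: "summable (\<lambda>k. \<bar>F t k\<bar>)" if t: "t \<ge> 0" for t
    proof (rule summable_comparison_test[where g="\<lambda>k. Cg * rho y * (A t k + Cc * A t (Suc k))"])
      show "\<exists>N. \<forall>n\<ge>N. norm \<bar>F t n\<bar> \<le> Cg * rho y * (A t n + Cc * A t (Suc n))"
      proof (intro exI[of _ 0] allI impI)
        fix n :: nat
        have "\<gamma> (Suc n) \<le> Cg * real (Suc n)" using Cg(2)[rule_format, of "Suc n"] by simp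
        from Fb[OF t this] show "norm \<bar>F t n\<bar> \<le> Cg * rho y * (A t n + Cc * A t (Suc n))" by simp
      qed
      have "summable (\<lambda>k. A t (Suc k))" using Asum[OF t] by (simp only: summable_Suc_iff)
      hence "summable (\<lambda>k. A t k + Cc * A t (Suc k))"
        by (rule summable_add[OF Asum[OF t] summable_mult])
      thus "summable (\<lambda>k. Cg * rho y * (A t k + Cc * A t (Suc k)))"
        by (rule summable_mult)
    qed
    have Fsumm: "summable (F t)" if "t \<ge> 0" for t
      by (rule summable_rabs_cancel[OF Fabs_summ[OF that]])
    show ?thesis
    proof (rule tendsto_iff[THEN iffD2], intro allI impI)
      fix e :: real assume e: "e > 0"
      define \<eta> where "\<eta> = e / (4 * (rho y * rho y * (1 + Cc) + 1))"
      have \<eta>0: "\<eta> > 0" unfolding \<eta>_def using e rho0 Cc0 by (simp add: add_pos_nonneg)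
      have \<eta>b: "\<eta> * (rho y * rho y * (1 + Cc)) < e / 2"
      proof -
        have "\<eta> * (rho y * rho y * (1 + Cc)) \<le> \<eta> * (rho y * rho y * (1 + Cc) + 1)"
          using \<eta>0 by simp
        also have "\<dots> = e / 4"
        proof -
          have D: "rho y * rho y * (1 + Cc) + 1 > 0" using rho0 Cc0 by (simp add: add_pos_nonneg)
          show ?thesis unfolding \<eta>_def using D by (simp add: field_simps)
        qed
        finally show ?thesis using e by simp
      qed
      have "eventually (\<lambda>l. \<bar>\<gamma> l / real l - 0\<bar> < \<eta>) sequentially"
        using gamma_lim[unfolded tendsto_iff] \<eta>0 by (simp add: dist_real_def)
      then obtain L0 where L0: "\<forall>l\<ge>L0. \<bar>\<gamma> l / real l\<bar> < \<eta>" by (auto simp: eventually_sequentially)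
      have gL: "\<gamma> (Suc k) \<le> \<eta> * real (Suc k)" if "k \<ge> L0" for k
      proof -
        have "\<gamma> (Suc k) / real (Suc k) < \<eta>"
          using L0[rule_format, of "Suc k"] that abs_ge_self[of "\<gamma> (Suc k) / real (Suc k)"] by linarith
        thus ?thesis by (simp add: divide_less_eq less_imp_le)
      qed
      have tail: "\<bar>(\<Sum>k. F t (k + L0))\<bar> < e / 2" if t: "t \<ge> 0" for t
      proof -
        have s1: "summable (\<lambda>k. \<bar>F t (k + L0)\<bar>)"
          using summable_ignore_initial_segment[OF Fabs_summ[OF t], of L0] by simp
        have "\<bar>(\<Sum>k. F t (k + L0))\<bar> \<le> (\<Sum>k. \<bar>F t (k + L0)\<bar>)" by (rule summable_rabs[OF s1])
        also have "\<dots> \<le> \<eta> * (rho y * rho y * (1 + Cc))"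
        proof (rule suminf_le_const[OF s1])
          fix n
          have "(\<Sum>k<n. \<bar>F t (k + L0)\<bar>) \<le> (\<Sum>k<n. \<eta> * rho y * (A t (k + L0) + Cc * A t (Suc (k + L0))))"
            by (rule sum_mono) (use Fb[OF t gL] in auto)
          also have "\<dots> = \<eta> * rho y * ((\<Sum>k<n. A t (k + L0)) + Cc * (\<Sum>k<n. A t (k + Suc L0)))"
            by (simp add: sum_distrib_left distrib_left sum.distrib mult.assoc)
          also have "\<dots> \<le> \<eta> * rho y * (rho y + Cc * rho y)"
          proof -
            have u1: "(\<Sum>k<n. A t (k + L0)) \<le> rho y" by (rule shift_le) (use Ann[OF t] Amass[OF t] in auto)
            have "(\<Sum>k<n. A t (k + Suc L0)) \<le> rho y" by (rule shift_le) (use Ann[OF t] Amass[OF t] in auto)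
            hence u2: "Cc * (\<Sum>k<n. A t (k + Suc L0)) \<le> Cc * rho y" using Cc0 by (rule mult_left_mono)
            have "0 \<le> \<eta> * rho y" using \<eta>0 rho0 by simp
            thus ?thesis using u1 u2 by (intro mult_left_mono) auto
          qed
          finally show "(\<Sum>k<n. \<bar>F t (k + L0)\<bar>) \<le> \<eta> * (rho y * rho y * (1 + Cc))"
            by (simp add: algebra_simps)
        qed
        finally show ?thesis using \<eta>b by linarith
      qed
      have "((\<lambda>t. \<Sum>k<L0. F t k) \<longlongrightarrow> (\<Sum>k<L0. 0)) at_top"
        by (rule tendsto_sum) (use pos_case in \<open>auto simp: F_def\<close>)
      hence lim0: "((\<lambda>t. \<Sum>k<L0. F t k) \<longlongrightarrow> 0) at_top" by simp
      have e2: "e / 2 > 0" using e by simp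
      have "eventually (\<lambda>t. dist (\<Sum>k<L0. F t k) 0 < e / 2) at_top"
        using tendsto_iff[THEN iffD1, OF lim0, rule_format, OF e2] .
      moreover have "eventually (\<lambda>t. t \<ge> (0::real)) at_top" by (rule eventually_ge_at_top)
      ultimately show "eventually (\<lambda>t. dist (Jflux q \<gamma> (z t) 0) 0 < e) at_top"
      proof eventually_elim
        case (elim t)
        have "suminf (F t) = (\<Sum>k. F t (k + L0)) + (\<Sum>k<L0. F t k)"
          by (rule suminf_split_initial_segment[OF Fsumm[OF elim(2)]])
        hence "\<bar>suminf (F t)\<bar> \<le> \<bar>\<Sum>k. F t (k + L0)\<bar> + \<bar>\<Sum>k<L0. F t k\<bar>" by linarith
        thus ?case using tail[OF elim(2)] elim(1) by (simp add: J0 dist_real_def)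
      qed
    qed
  qed
  show ?thesis
  proof
    fix l show "((\<lambda>t. Jflux q \<gamma> (z t) l) \<longlongrightarrow> 0) at_top"
      using zero_case pos_case by (cases "l = 0") auto
  qed
qed


end
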